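(* Let $f:S^1\to\mathbb{R}$ be upper semicontinuous, $\lambda\ge0$, and let $\mu_1=\sum_{j=1}^N r_j\delta_{x_j}\in\mathcal{M}_+(S^1)$ be a finitely supported measure with exactly $N$ atoms. Then the problem \[ \sup_{\mu_0\in\mathcal{B}_\lambda(\mu_1)}\int_{S^1}f\,\mathrm{d}\mu_0 \] admits a maximizer $\mu_0$ that is a finitely supported nonnegative measure with at most $N+2$ support points.
   Context: $S^1$ is the unit circle in $\mathbb{C}$. $\mathcal{B}_\lambda(\mu_1):=\{\mu_0\in\mathcal{M}_+(S^1):\mathcal{U}(\mu_0,\mu_1)\le\lambda\}$, where $\mathcal{U}$ is the Wasserstein–Fisher–Rao distance: for $\mu_0,\mu_1\in\mathcal{M}_+(S^1)$, let $\Gamma(\mu_0,\mu_1)$ be the set of nonnegative Borel measures $\gamma$ on $\mathbb{C}\times\mathbb{C}$ with finite second moment such that $(\theta_i)_\#(r_i^2\gamma)=\mu_i$, $i=0,1$, with $r_i(x_0,x_1)=|x_i|$, $\theta_i(x_0,x_1)=x_i/|x_i|$ (a fixed arbitrary point of $S^1$ if $x_i=0$); $\mathcal{U}(\mu_0,\mu_1):=\inf_{\gamma\in\Gamma(\mu_0,\mu_1)}(\int|x-y|^2\,\mathrm{d}\gamma)^{1/2}$ ($+\infty$ if $\Gamma=\emptyset$). *)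

theory Defs
  imports "HOL-Analysis.Analysis" "HOL-Probability.Probability"
begin

abbreviation S1 :: "complex set" where
  "S1 \<equiv> sphere 0 1"

definition Mplus_S1 :: "complex measure set" where
  "Mplus_S1 = {\<mu>. sets \<mu> = sets (restrict_space borel S1) \<and> emeasure \<mu> S1 < \<infinity>}"

definition usc_on_S1 :: "(complex \<Rightarrow> real) \<Rightarrow> bool" where
  "usc_on_S1 f \<longleftrightarrow> (\<forall>a. openin (top_of_set S1) {x \<in> S1. f x < a})"

definition theta :: "complex \<Rightarrow> complex" where
  "theta x = (if x = 0 then 1 else x / complex_of_real (cmod x))"

text \<open>Admissible plans Gamma(mu0, mu1): nonnegative Borel measures on C x C with finite
  second moment whose homogeneous marginals are mu0 and mu1.\<close>
definition Gamma_WFR :: "complex measure \<Rightarrow> complex measure \<Rightarrow> (complex \<times> complex) measure set" where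
  "Gamma_WFR \<mu>0 \<mu>1 = {\<gamma>. sets \<gamma> = sets (borel :: (complex \<times> complex) measure)
     \<and> (\<integral>\<^sup>+ p. ennreal ((cmod (fst p))\<^sup>2 + (cmod (snd p))\<^sup>2) \<partial>\<gamma>) < \<infinity>
     \<and> (\<forall>A \<in> sets \<mu>0. emeasure \<mu>0 A = (\<integral>\<^sup>+ p. ennreal ((cmod (fst p))\<^sup>2) * indicator A (theta (fst p)) \<partial>\<gamma>))
     \<and> (\<forall>A \<in> sets \<mu>1. emeasure \<mu>1 A = (\<integral>\<^sup>+ p. ennreal ((cmod (snd p))\<^sup>2) * indicator A (theta (snd p)) \<partial>\<gamma>))}"

text \<open>Wasserstein--Fisher--Rao distance U(mu0,mu1) = inf over plans of (int |x-y|^2 d gamma)^(1/2);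
  equal to infinity if there is no plan (INF over the empty set is top).\<close>
definition WFR :: "complex measure \<Rightarrow> complex measure \<Rightarrow> ennreal" where
  "WFR \<mu>0 \<mu>1 = (INF \<gamma> \<in> Gamma_WFR \<mu>0 \<mu>1.
      (let c = (\<integral>\<^sup>+ p. ennreal ((cmod (fst p - snd p))\<^sup>2) \<partial>\<gamma>)
       in if c = \<infinity> then \<infinity> else ennreal (sqrt (enn2real c))))"

definition WFR_ball :: "real \<Rightarrow> complex measure \<Rightarrow> complex measure set" where
  "WFR_ball lam \<mu>1 = {\<mu>0 \<in> Mplus_S1. WFR \<mu>0 \<mu>1 \<le> ennreal lam}"

text \<open>Extended-real integral int f d mu = int f^+ d mu - int f^- d mu (may be -infinity).\<close>
definition ext_integral :: "(complex \<Rightarrow> real) \<Rightarrow> complex measure \<Rightarrow> ereal" where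
  "ext_integral f \<mu> = enn2ereal (\<integral>\<^sup>+ x. ennreal (f x) \<partial>\<mu>) - enn2ereal (\<integral>\<^sup>+ x. ennreal (- f x) \<partial>\<mu>)"

end

theory Submission
  imports Defs
begin



definition atomic :: "nat \<Rightarrow> (nat \<Rightarrow> real) \<Rightarrow> (nat \<Rightarrow> complex) \<Rightarrow> complex measure" where
  "atomic K w z = distr (density (count_space {..<K}) (\<lambda>k. ennreal (w k))) (restrict_space borel S1) z"

lemma sets_atomic[simp]: "sets (atomic K w z) = sets (restrict_space borel S1)"
  unfolding atomic_def by simp

lemma z_meas: assumes "\<forall>k<K. z k \<in> S1"
  shows "z \<in> measurable (density (count_space {..<K}) (\<lambda>k. ennreal (w k))) (restrict_space borel S1)"
  using assms by (auto simp: measurable_count_space_eq1)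

lemma emeasure_atomic:
  assumes "\<forall>k<K. z k \<in> S1" "A \<in> sets (restrict_space borel S1)"
  shows "emeasure (atomic K w z) A = (\<Sum>k<K. ennreal (w k) * indicator A (z k))"
proof -
  have "emeasure (atomic K w z) A = emeasure (density (count_space {..<K}) (\<lambda>k. ennreal (w k))) (z -` A \<inter> {..<K})"
    unfolding atomic_def using z_meas[OF assms(1)] assms(2) by (subst emeasure_distr) auto
  also have "\<dots> = (\<integral>\<^sup>+ k. ennreal (w k) * indicator (z -` A \<inter> {..<K}) k \<partial>count_space {..<K})"
    by (subst emeasure_density) auto
  also have "\<dots> = (\<Sum>k<K. ennreal (w k) * indicator A (z k))"
    by (subst nn_integral_count_space_finite) (auto intro!: sum.cong simp: indicator_def)
  finally show ?thesis .
qed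

lemma nn_integral_atomic:
  assumes "\<forall>k<K. z k \<in> S1" "g \<in> borel_measurable (restrict_space borel S1)"
  shows "(\<integral>\<^sup>+ y. g y \<partial>atomic K w z) = (\<Sum>k<K. ennreal (w k) * g (z k))"
proof -
  have "(\<integral>\<^sup>+ y. g y \<partial>atomic K w z) = (\<integral>\<^sup>+ k. g (z k) \<partial>density (count_space {..<K}) (\<lambda>k. ennreal (w k)))"
    unfolding atomic_def using z_meas[OF assms(1)] assms(2) by (subst nn_integral_distr) auto
  also have "\<dots> = (\<integral>\<^sup>+ k. ennreal (w k) * g (z k) \<partial>count_space {..<K})"
    by (subst nn_integral_density) auto
  also have "\<dots> = (\<Sum>k<K. ennreal (w k) * g (z k))"
    by (subst nn_integral_count_space_finite) auto
  finally show ?thesis .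
qed

lemma theta_S1: "theta p \<in> S1"
  unfolding theta_def by (auto simp: norm_divide)

lemma norm_theta[simp]: "cmod (theta p) = 1"
  using theta_S1[of p] by simp

lemma theta_meas: "theta \<in> borel_measurable borel"
  unfolding theta_def by measurable

lemma theta_meas2: "theta \<in> measurable borel (restrict_space borel S1)"
  by (rule measurable_restrict_space2) (auto simp: theta_meas theta_S1)

lemma theta_fst_meas: "(\<lambda>p. theta (fst p)) \<in> measurable (borel :: (complex\<times>complex) measure) (restrict_space borel S1)"
proof -
  have "fst \<in> measurable (borel :: (complex\<times>complex) measure) borel" by (intro borel_measurable_continuous_onI continuous_intros)
  then show ?thesis using measurable_compose[OF _ theta_meas2] by blast
qed
lemma theta_snd_meas: "(\<lambda>p. theta (snd p)) \<in> measurable (borel :: (complex\<times>complex) measure) (restrict_space borel S1)"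
proof -
  have "snd \<in> measurable (borel :: (complex\<times>complex) measure) borel" by (intro borel_measurable_continuous_onI continuous_intros)
  then show ?thesis using measurable_compose[OF _ theta_meas2] by blast
qed




lemma Gamma_sets: "\<gamma> \<in> Gamma_WFR \<mu>0 \<mu>1 \<Longrightarrow> sets \<gamma> = sets (borel :: (complex\<times>complex) measure)"
  by (simp add: Gamma_WFR_def)

lemma fst_meas: "fst \<in> borel_measurable (borel :: (complex\<times>complex) measure)"
  by (intro borel_measurable_continuous_onI continuous_intros)
lemma snd_meas: "snd \<in> borel_measurable (borel :: (complex\<times>complex) measure)"
  by (intro borel_measurable_continuous_onI continuous_intros)

lemma transfer_gen:
  fixes \<gamma> :: "(complex\<times>complex) measure" and \<pi> :: "complex \<times> complex \<Rightarrow> complex"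
  assumes sg: "sets \<gamma> = sets (borel :: (complex\<times>complex) measure)"
    and s0: "sets \<mu> = sets (restrict_space borel S1)"
    and pm: "(\<lambda>p. theta (\<pi> p)) \<in> measurable (borel :: (complex\<times>complex) measure) (restrict_space borel S1)"
    and pm2: "\<pi> \<in> borel_measurable (borel :: (complex\<times>complex) measure)"
    and marg: "\<forall>A \<in> sets \<mu>. emeasure \<mu> A = (\<integral>\<^sup>+ p. ennreal ((cmod (\<pi> p))\<^sup>2) * indicator A (theta (\<pi> p)) \<partial>\<gamma>)"
    and g: "g \<in> borel_measurable (restrict_space borel S1)"
  shows "(\<integral>\<^sup>+ y. g y \<partial>\<mu>) = (\<integral>\<^sup>+ p. ennreal ((cmod (\<pi> p))\<^sup>2) * g (theta (\<pi> p)) \<partial>\<gamma>)"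
proof -
  have tm: "(\<lambda>p. theta (\<pi> p)) \<in> measurable \<gamma> (restrict_space borel S1)"
    using pm measurable_cong_sets[OF sg refl] by blast
  have hm: "(\<lambda>p. ennreal ((cmod (\<pi> p))\<^sup>2)) \<in> borel_measurable \<gamma>"
    using measurable_cong_sets[OF sg refl] pm2 by (metis borel_measurable_norm borel_measurable_power measurable_compose_rev measurable_ennreal)
  define D where "D = distr (density \<gamma> (\<lambda>p. ennreal ((cmod (\<pi> p))\<^sup>2))) (restrict_space borel S1) (\<lambda>p. theta (\<pi> p))"
  have tm2: "(\<lambda>p. theta (\<pi> p)) \<in> measurable (density \<gamma> (\<lambda>p. ennreal ((cmod (\<pi> p))\<^sup>2))) (restrict_space borel S1)"
    using tm by simp
  have "\<mu> = D"
  proof (rule measure_eqI)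
    show "sets \<mu> = sets D" using s0 by (simp add: D_def)
    fix A assume A: "A \<in> sets \<mu>"
    then have A': "A \<in> sets (restrict_space borel S1)" using s0 by simp
    have "emeasure D A = emeasure (density \<gamma> (\<lambda>p. ennreal ((cmod (\<pi> p))\<^sup>2))) ((\<lambda>p. theta (\<pi> p)) -` A \<inter> space \<gamma>)"
      unfolding D_def using tm2 A' by (subst emeasure_distr) auto
    also have "\<dots> = (\<integral>\<^sup>+ p. ennreal ((cmod (\<pi> p))\<^sup>2) * indicator ((\<lambda>p. theta (\<pi> p)) -` A \<inter> space \<gamma>) p \<partial>\<gamma>)"
      using hm tm A' by (subst emeasure_density) (auto intro!: measurable_sets)
    also have "\<dots> = (\<integral>\<^sup>+ p. ennreal ((cmod (\<pi> p))\<^sup>2) * indicator A (theta (\<pi> p)) \<partial>\<gamma>)"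
      by (intro nn_integral_cong) (auto simp: indicator_def)
    finally show "emeasure \<mu> A = emeasure D A" using marg A by simp
  qed
  then have "(\<integral>\<^sup>+ y. g y \<partial>\<mu>) = (\<integral>\<^sup>+ p. g (theta (\<pi> p)) \<partial>density \<gamma> (\<lambda>p. ennreal ((cmod (\<pi> p))\<^sup>2)))"
    unfolding D_def using tm2 g by (simp add: nn_integral_distr)
  also have "\<dots> = (\<integral>\<^sup>+ p. ennreal ((cmod (\<pi> p))\<^sup>2) * g (theta (\<pi> p)) \<partial>\<gamma>)"
    using hm measurable_compose[OF tm g] by (subst nn_integral_density) auto
  finally show ?thesis .
qed

lemma transfer_fst:
  assumes "\<gamma> \<in> Gamma_WFR \<mu>0 \<mu>1" "sets \<mu>0 = sets (restrict_space borel S1)"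
    "g \<in> borel_measurable (restrict_space borel S1)"
  shows "(\<integral>\<^sup>+ y. g y \<partial>\<mu>0) = (\<integral>\<^sup>+ p. ennreal ((cmod (fst p))\<^sup>2) * g (theta (fst p)) \<partial>\<gamma>)"
  apply (rule transfer_gen[where \<pi>=fst])
  using assms theta_fst_meas fst_meas by (auto simp: Gamma_WFR_def)

lemma transfer_snd:
  assumes "\<gamma> \<in> Gamma_WFR \<mu>0 \<mu>1" "sets \<mu>1 = sets (restrict_space borel S1)"
    "g \<in> borel_measurable (restrict_space borel S1)"
  shows "(\<integral>\<^sup>+ y. g y \<partial>\<mu>1) = (\<integral>\<^sup>+ p. ennreal ((cmod (snd p))\<^sup>2) * g (theta (snd p)) \<partial>\<gamma>)"
  apply (rule transfer_gen[where \<pi>=snd])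
  using assms theta_snd_meas snd_meas by (auto simp: Gamma_WFR_def)




lemma usc_max_gen:
  fixes g :: "'a::metric_space \<Rightarrow> real"
  assumes K: "compact K" "K \<noteq> {}"
    and u: "\<And>s l e. (\<forall>n. s n \<in> K) \<Longrightarrow> s \<longlonglongrightarrow> l \<Longrightarrow> l \<in> K \<Longrightarrow> e > 0 \<Longrightarrow>
              eventually (\<lambda>n. g (s n) < g l + e) sequentially"
  shows "\<exists>x\<in>K. \<forall>y\<in>K. g y \<le> g x"
proof -
  have sc: "seq_compact K" using K(1) by (rule compact_imp_seq_compact)
  have bdd: "bdd_above (g ` K)"
  proof (rule ccontr)
    assume nb: "\<not> bdd_above (g ` K)"
    have "\<forall>n::nat. \<exists>y\<in>K. g y > real n"
    proof
      fix n :: nat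
      show "\<exists>y\<in>K. g y > real n"
        using nb unfolding bdd_above_def by (auto simp: not_le)
    qed
    then obtain s where s: "\<And>n. s n \<in> K" "\<And>n. g (s n) > real n" by metis
    from seq_compactE[OF sc, of s] s(1) obtain l r where lr: "l \<in> K" "strict_mono r" "(s \<circ> r) \<longlonglongrightarrow> l"
      by blast
    have ev: "eventually (\<lambda>n. g ((s \<circ> r) n) < g l + 1) sequentially"
      using u[of "s \<circ> r" l 1] lr s(1) by auto
    obtain N where N: "\<And>n. n \<ge> N \<Longrightarrow> g ((s \<circ> r) n) < g l + 1"
      using ev unfolding eventually_sequentially by blast
    obtain m :: nat where m: "real m > g l + 1" using reals_Archimedean2 by blast
    define n where "n = max N m"
    have "g ((s \<circ> r) n) < g l + 1" using N n_def by simp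
    moreover have "g ((s \<circ> r) n) > real (r n)" using s(2) by simp
    moreover have "r n \<ge> n" using lr(2) by (rule seq_suble)
    moreover have "real n \<ge> real m" using n_def by simp
    ultimately have "g l + 1 > real (r n)" "real (r n) \<ge> real n" by auto
    then show False using m \<open>real n \<ge> real m\<close> by linarith
  qed
  define S where "S = Sup (g ` K)"
  have "\<forall>n::nat. \<exists>y\<in>K. g y > S - 1 / real (Suc n)"
  proof
    fix n :: nat
    have "S - 1 / real (Suc n) < S" by simp
    then show "\<exists>y\<in>K. g y > S - 1 / real (Suc n)"
      unfolding S_def using K(2) bdd by (subst (asm) less_cSUP_iff) auto
  qed
  then obtain s where s: "\<And>n. s n \<in> K" "\<And>n. g (s n) > S - 1 / real (Suc n)" by metis
  from seq_compactE[OF sc, of s] s(1) obtain l r where lr: "l \<in> K" "strict_mono r" "(s \<circ> r) \<longlonglongrightarrow> l"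
    by blast
  have "S \<le> g l + e" if e: "e > 0" for e
  proof -
    have ev: "eventually (\<lambda>n. g ((s \<circ> r) n) < g l + e / 2) sequentially"
      using u[of "s \<circ> r" l "e/2"] lr s(1) e by auto
    obtain N where N: "\<And>n. n \<ge> N \<Longrightarrow> g ((s \<circ> r) n) < g l + e/2"
      using ev unfolding eventually_sequentially by blast
    obtain m :: nat where m: "inverse (real (Suc m)) < e/2" using reals_Archimedean e by (metis half_gt_zero)
    define n where "n = max N m"
    have 1: "g ((s \<circ> r) n) < g l + e/2" using N n_def by simp
    have 2: "g ((s \<circ> r) n) > S - 1 / real (Suc (r n))" using s(2) by simp
    have "r n \<ge> n" using lr(2) by (rule seq_suble)
    then have "1 / real (Suc (r n)) \<le> 1 / real (Suc m)" using n_def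
      by (intro divide_left_mono) auto
    with 1 2 m show ?thesis by (simp add: inverse_eq_divide)
  qed
  then have "S \<le> g l" by (rule field_le_epsilon)
  moreover have "\<forall>y\<in>K. g y \<le> S" unfolding S_def using bdd by (auto intro: cSUP_upper)
  ultimately show ?thesis using lr(1) by force
qed

locale uscf =
  fixes f :: "complex \<Rightarrow> real"
  assumes usc: "usc_on_S1 f"
begin

lemma f_meas: "f \<in> borel_measurable (restrict_space borel S1)"
proof (subst borel_measurable_iff_less, intro allI)
  fix a
  obtain T where T: "open T" "{x \<in> S1. f x < a} = S1 \<inter> T"
    using usc unfolding usc_on_S1_def openin_open by blast
  have "{w \<in> space (restrict_space borel S1). f w < a} = S1 \<inter> T"
    using T by (auto simp: space_restrict_space)
  also have "\<dots> \<in> sets (restrict_space borel S1)"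
    using T(1) by (subst sets_restrict_space_iff) auto
  finally show "{w \<in> space (restrict_space borel S1). f w < a} \<in> sets (restrict_space borel S1)" .
qed

lemma usc_seq:
  assumes "s \<longlonglongrightarrow> l" "\<forall>n. s n \<in> S1" "l \<in> S1" "e > 0"
  shows "eventually (\<lambda>n. f (s n) < f l + e) sequentially"
proof -
  obtain T where T: "open T" "{x \<in> S1. f x < f l + e} = S1 \<inter> T"
    using usc unfolding usc_on_S1_def openin_open by blast
  have key: "f y < f l + e" if "y \<in> S1" "y \<in> T" for y
  proof -
    have "y \<in> S1 \<inter> T" using that by (rule IntI)
    then have "y \<in> {x \<in> S1. f x < f l + e}" by (simp only: T(2))
    then show ?thesis by simp
  qed
  have "l \<in> {x \<in> S1. f x < f l + e}" using assms(3,4) by simp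
  then have "l \<in> S1 \<inter> T" by (simp only: T(2))
  then have "l \<in> T" by (rule IntD2)
  from topological_tendstoD[OF assms(1) T(1) this]
  have "eventually (\<lambda>n. s n \<in> T) sequentially" .
  then show ?thesis
    by eventually_elim (use key assms(2) in blast)
qed

lemma f_max: "\<exists>t\<in>S1. \<forall>y\<in>S1. f y \<le> f t"
  by (rule usc_max_gen) (auto intro: usc_seq)

end




definition cc :: "complex \<Rightarrow> complex \<Rightarrow> real" where
  "cc y t = Re (t * cnj y)"
definition pc :: "complex \<Rightarrow> complex \<Rightarrow> real \<Rightarrow> real" where
  "pc y t \<rho> = \<rho>\<^sup>2 + 1 - 2 * \<rho> * cc y t"
definition tm :: "(complex \<Rightarrow> real) \<Rightarrow> real \<Rightarrow> complex \<Rightarrow> complex \<Rightarrow> real \<Rightarrow> real" where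
  "tm f a y t \<rho> = \<rho>\<^sup>2 * f t - a * pc y t \<rho>"

lemma S1_norm: "z \<in> S1 \<longleftrightarrow> cmod z = 1" by simp

lemma cc_le1: assumes "y \<in> S1" "t \<in> S1" shows "cc y t \<le> 1" "- 1 \<le> cc y t"
proof -
  have "\<bar>Re (t * cnj y)\<bar> \<le> cmod (t * cnj y)" by (rule abs_Re_le_cmod)
  also have "\<dots> = 1" using assms by (simp add: norm_mult)
  finally show "cc y t \<le> 1" "- 1 \<le> cc y t" unfolding cc_def by linarith+
qed

lemma cc_self: "y \<in> S1 \<Longrightarrow> cc y y = 1"
  unfolding cc_def by (simp add: complex_mult_cnj cmod_power2 power2_eq_square[symmetric])
    (metis S1_norm cmod_power2 one_power2 power2_eq_square)

lemma pc_ge: assumes "y \<in> S1" "t \<in> S1" "\<rho> \<ge> 0" shows "pc y t \<rho> \<ge> (\<rho> - 1)\<^sup>2"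
proof -
  have "\<rho> * cc y t \<le> \<rho>" using cc_le1[OF assms(1,2)] assms(3) by (simp add: mult_left_le)
  then show ?thesis unfolding pc_def by (simp add: power2_eq_square algebra_simps)
qed

lemma pc_nonneg: "y \<in> S1 \<Longrightarrow> t \<in> S1 \<Longrightarrow> \<rho> \<ge> 0 \<Longrightarrow> pc y t \<rho> \<ge> 0"
  using pc_ge[of y t \<rho>] by (smt (verit) zero_le_power2)

lemma rho_sq_le: assumes "y \<in> S1" "t \<in> S1" "\<rho> \<ge> 0" shows "\<rho>\<^sup>2 \<le> 2 * pc y t \<rho> + 2"
proof -
  have h: "0 \<le> (\<rho> - 2) * (\<rho> - 2)" by simp
  have "\<rho>\<^sup>2 \<le> 2 * (\<rho> - 1)\<^sup>2 + 2" using h unfolding power2_eq_square by (simp add: algebra_simps)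
  then show ?thesis using pc_ge[OF assms] by linarith
qed

lemma norm_diff_sq:
  assumes "y \<in> S1" "t \<in> S1"
  shows "(cmod (complex_of_real a * t - complex_of_real b * y))\<^sup>2 = a\<^sup>2 + b\<^sup>2 - 2 * a * b * cc y t"
proof -
  have t: "(Re t)\<^sup>2 + (Im t)\<^sup>2 = 1" using assms(2) by (simp add: cmod_def)
  have y: "(Re y)\<^sup>2 + (Im y)\<^sup>2 = 1" using assms(1) by (simp add: cmod_def)
  have "(cmod (complex_of_real a * t - complex_of_real b * y))\<^sup>2
      = (a * Re t - b * Re y)\<^sup>2 + (a * Im t - b * Im y)\<^sup>2"
    by (simp add: cmod_power2)
  also have "\<dots> = a\<^sup>2 * ((Re t)\<^sup>2 + (Im t)\<^sup>2) + b\<^sup>2 * ((Re y)\<^sup>2 + (Im y)\<^sup>2) - 2 * a * b * (Re t * Re y + Im t * Im y)"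
    by (simp add: power2_eq_square algebra_simps)
  also have "\<dots> = a\<^sup>2 + b\<^sup>2 - 2 * a * b * cc y t"
    using t y by (simp add: cc_def)
  finally show ?thesis .
qed

lemma theta_decomp: "complex_of_real (cmod z) * theta z = z"
  by (simp add: theta_def)

lemma norm_diff_theta:
  "(cmod (p - q))\<^sup>2 = (cmod p)\<^sup>2 + (cmod q)\<^sup>2 - 2 * cmod p * cmod q * cc (theta q) (theta p)"
  using norm_diff_sq[where y="theta q" and t="theta p" and a="cmod p" and b="cmod q", OF theta_S1 theta_S1] by (simp add: theta_decomp)

lemma pc_norm: "y \<in> S1 \<Longrightarrow> t \<in> S1 \<Longrightarrow> pc y t \<rho> = (cmod (complex_of_real \<rho> * t - y))\<^sup>2"
  using norm_diff_sq[of y t \<rho> 1] by (simp add: pc_def)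




locale setting = uscf f for f +
  fixes lam :: real and \<mu>1 :: "complex measure" and N :: nat and r :: "nat \<Rightarrow> real" and x :: "nat \<Rightarrow> complex"
  assumes lam: "lam \<ge> 0"
    and mu1: "\<mu>1 \<in> Mplus_S1"
    and atoms_on: "\<forall>j<N. x j \<in> S1"
    and atoms_distinct: "inj_on x {..<N}"
    and weights_pos: "\<forall>j<N. r j > 0"
    and mu1_eq: "\<forall>A \<in> sets \<mu>1. emeasure \<mu>1 A = (\<Sum>j<N. ennreal (r j) * indicator A (x j))"
begin

lemma mu1_sets: "sets \<mu>1 = sets (restrict_space borel S1)"
  using mu1 by (simp add: Mplus_S1_def)

lemma mu1_atomic: "\<mu>1 = atomic N r x"
proof (rule measure_eqI)
  show "sets \<mu>1 = sets (atomic N r x)" by (simp add: mu1_sets)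
  fix A assume A: "A \<in> sets \<mu>1"
  then have A': "A \<in> sets (restrict_space borel S1)" by (simp add: mu1_sets)
  show "emeasure \<mu>1 A = emeasure (atomic N r x) A"
    using mu1_eq A by (simp add: emeasure_atomic[OF atoms_on A'])
qed

lemma plan:
  fixes K :: nat and p q :: "nat \<Rightarrow> complex"
  assumes margR: "\<And>A. (\<Sum>k<K. (cmod (q k))\<^sup>2 * indicator A (theta (q k))) = (\<Sum>j<N. r j * indicator A (x j))"
    and cost: "(\<Sum>k<K. (cmod (p k - q k))\<^sup>2) \<le> lam\<^sup>2"
  defines "\<mu>0 \<equiv> atomic K (\<lambda>k. (cmod (p k))\<^sup>2) (\<lambda>k. theta (p k))"
  shows "\<mu>0 \<in> WFR_ball lam \<mu>1"
    and "ext_integral f \<mu>0 = ereal (\<Sum>k<K. (cmod (p k))\<^sup>2 * f (theta (p k)))"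
    and "\<exists>P. finite P \<and> P \<subseteq> S1 \<and> card P \<le> K \<and> emeasure \<mu>0 (S1 - P) = 0"
proof -
  have marg: "(\<Sum>k<K. ennreal ((cmod (q k))\<^sup>2) * indicator A (theta (q k))) = (\<Sum>j<N. ennreal (r j) * indicator A (x j))" for A
  proof -
    have ei: "ennreal a * indicator B z = ennreal (a * indicator B z)" if "a \<ge> 0" for a :: real and B and z :: complex
      by (simp add: indicator_def)
    have "(\<Sum>k<K. ennreal ((cmod (q k))\<^sup>2) * indicator A (theta (q k))) = (\<Sum>k<K. ennreal ((cmod (q k))\<^sup>2 * indicator A (theta (q k))))"
      by (intro sum.cong refl ei) simp
    also have "\<dots> = ennreal (\<Sum>k<K. (cmod (q k))\<^sup>2 * indicator A (theta (q k)))"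
      by (rule sum_ennreal) simp
    also have "\<dots> = ennreal (\<Sum>j<N. r j * indicator A (x j))" by (simp only: margR)
    also have "\<dots> = (\<Sum>j<N. ennreal (r j * indicator A (x j)))"
      using weights_pos by (intro sum_ennreal[symmetric]) (simp add: less_imp_le)
    also have "\<dots> = (\<Sum>j<N. ennreal (r j) * indicator A (x j))"
      using weights_pos by (intro sum.cong refl ei[symmetric]) (simp add: less_imp_le)
    finally show ?thesis .
  qed
  have zS: "\<forall>k<K. theta (p k) \<in> S1" by (simp add: theta_S1)
  define \<gamma> :: "(complex \<times> complex) measure" where "\<gamma> = distr (count_space {..<K}) borel (\<lambda>k. (p k, q k))"
  note fst_meas[measurable] snd_meas[measurable]
  have pqm: "(\<lambda>k. (p k, q k)) \<in> measurable (count_space {..<K}) borel" by simp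
  have int\<gamma>: "(\<integral>\<^sup>+ z. h z \<partial>\<gamma>) = (\<Sum>k<K. h (p k, q k))" if "h \<in> borel_measurable borel" for h
    unfolding \<gamma>_def using that pqm by (simp add: nn_integral_distr nn_integral_count_space_finite)
  have sets\<gamma>: "sets \<gamma> = sets borel" by (simp add: \<gamma>_def)
  have nf: "(\<lambda>z. ennreal ((cmod (fst z))\<^sup>2)) \<in> borel_measurable (borel :: (complex\<times>complex) measure)"
    using fst_meas by measurable
  have ns: "(\<lambda>z. ennreal ((cmod (snd z))\<^sup>2)) \<in> borel_measurable (borel :: (complex\<times>complex) measure)"
    using snd_meas by measurable
  have ind_f: "(\<lambda>z. indicator A (theta (fst z)) :: ennreal) \<in> borel_measurable (borel :: (complex\<times>complex) measure)"
    if "A \<in> sets (restrict_space borel S1)" for A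
    using measurable_compose[OF theta_fst_meas borel_measurable_indicator[OF that]] by simp
  have ind_s: "(\<lambda>z. indicator A (theta (snd z)) :: ennreal) \<in> borel_measurable (borel :: (complex\<times>complex) measure)"
    if "A \<in> sets (restrict_space borel S1)" for A
    using measurable_compose[OF theta_snd_meas borel_measurable_indicator[OF that]] by simp
  have \<gamma>G: "\<gamma> \<in> Gamma_WFR \<mu>0 \<mu>1"
    unfolding Gamma_WFR_def
  proof (intro CollectI conjI ballI)
    show "sets \<gamma> = sets borel" by (rule sets\<gamma>)
    have "(\<integral>\<^sup>+ z. ennreal ((cmod (fst z))\<^sup>2 + (cmod (snd z))\<^sup>2) \<partial>\<gamma>)
        = (\<Sum>k<K. ennreal ((cmod (p k))\<^sup>2 + (cmod (q k))\<^sup>2))"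
      by (subst int\<gamma>) auto
    then show "(\<integral>\<^sup>+ z. ennreal ((cmod (fst z))\<^sup>2 + (cmod (snd z))\<^sup>2) \<partial>\<gamma>) < \<infinity>"
      by (simp add: sum_ennreal)
  next
    fix A assume A: "A \<in> sets \<mu>0"
    then have A': "A \<in> sets (restrict_space borel S1)" by (simp add: \<mu>0_def)
    show "emeasure \<mu>0 A = (\<integral>\<^sup>+ z. ennreal ((cmod (fst z))\<^sup>2) * indicator A (theta (fst z)) \<partial>\<gamma>)"
      unfolding \<mu>0_def using A' zS nf ind_f[OF A'] by (subst int\<gamma>) (auto simp: emeasure_atomic)
  next
    fix A assume A: "A \<in> sets \<mu>1"
    then have A': "A \<in> sets (restrict_space borel S1)" by (simp add: mu1_sets)
    show "emeasure \<mu>1 A = (\<integral>\<^sup>+ z. ennreal ((cmod (snd z))\<^sup>2) * indicator A (theta (snd z)) \<partial>\<gamma>)"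
      using A ns ind_s[OF A'] mu1_eq marg[of A] by (subst int\<gamma>) auto
  qed
  have costI: "(\<integral>\<^sup>+ z. ennreal ((cmod (fst z - snd z))\<^sup>2) \<partial>\<gamma>) = ennreal (\<Sum>k<K. (cmod (p k - q k))\<^sup>2)"
    by (subst int\<gamma>) (auto simp: sum_ennreal)
  have "WFR \<mu>0 \<mu>1 \<le> ennreal (sqrt (\<Sum>k<K. (cmod (p k - q k))\<^sup>2))"
    unfolding WFR_def
    using sum_nonneg[of "{..<K}" "\<lambda>k. (cmod (p k - q k))\<^sup>2"]
    by (intro INF_lower2[OF \<gamma>G]) (simp add: costI Let_def)
  also have "\<dots> \<le> ennreal lam"
    using cost lam by (intro ennreal_leI) (simp add: real_le_lsqrt)
  finally have W: "WFR \<mu>0 \<mu>1 \<le> ennreal lam" .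
  have "emeasure \<mu>0 S1 = (\<Sum>k<K. ennreal ((cmod (p k))\<^sup>2) * indicator S1 (theta (p k)))"
    unfolding \<mu>0_def using zS by (subst emeasure_atomic) (auto simp: sets_restrict_space_iff)
  then have "emeasure \<mu>0 S1 < \<infinity>" by (simp add: ennreal_mult'[symmetric] ennreal_indicator[symmetric] sum_ennreal del: ennreal_indicator)
  then show "\<mu>0 \<in> WFR_ball lam \<mu>1" using W by (simp add: WFR_ball_def Mplus_S1_def \<mu>0_def)
  have fp: "(\<lambda>y. ennreal (f y)) \<in> borel_measurable (restrict_space borel S1)" using f_meas by measurable
  have fm: "(\<lambda>y. ennreal (- f y)) \<in> borel_measurable (restrict_space borel S1)" using f_meas by measurable
  have I1: "(\<integral>\<^sup>+ y. ennreal (f y) \<partial>\<mu>0) = ennreal (\<Sum>k<K. (cmod (p k))\<^sup>2 * max (f (theta (p k))) 0)"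
  proof -
    have "(\<integral>\<^sup>+ y. ennreal (f y) \<partial>\<mu>0) = (\<Sum>k<K. ennreal ((cmod (p k))\<^sup>2) * ennreal (f (theta (p k))))"
      unfolding \<mu>0_def by (rule nn_integral_atomic[OF zS fp])
    also have "\<dots> = (\<Sum>k<K. ennreal ((cmod (p k))\<^sup>2 * max (f (theta (p k))) 0))"
      by (intro sum.cong refl) (simp add: ennreal_mult' ennreal_max_0)
    also have "\<dots> = ennreal (\<Sum>k<K. (cmod (p k))\<^sup>2 * max (f (theta (p k))) 0)"
      by (rule sum_ennreal) simp
    finally show ?thesis .
  qed
  have I2: "(\<integral>\<^sup>+ y. ennreal (- f y) \<partial>\<mu>0) = ennreal (\<Sum>k<K. (cmod (p k))\<^sup>2 * max (- f (theta (p k))) 0)"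
  proof -
    have "(\<integral>\<^sup>+ y. ennreal (- f y) \<partial>\<mu>0) = (\<Sum>k<K. ennreal ((cmod (p k))\<^sup>2) * ennreal (- f (theta (p k))))"
      unfolding \<mu>0_def by (rule nn_integral_atomic[OF zS fm])
    also have "\<dots> = (\<Sum>k<K. ennreal ((cmod (p k))\<^sup>2 * max (- f (theta (p k))) 0))"
      by (intro sum.cong refl) (simp add: ennreal_mult' ennreal_max_0)
    also have "\<dots> = ennreal (\<Sum>k<K. (cmod (p k))\<^sup>2 * max (- f (theta (p k))) 0)"
      by (rule sum_ennreal) simp
    finally show ?thesis .
  qed
  have "(\<Sum>k<K. (cmod (p k))\<^sup>2 * max (f (theta (p k))) 0) - (\<Sum>k<K. (cmod (p k))\<^sup>2 * max (- f (theta (p k))) 0)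
      = (\<Sum>k<K. (cmod (p k))\<^sup>2 * f (theta (p k)))"
  proof -
    have mm: "\<And>a::real. max a 0 - max (- a) 0 = a" by auto
    show ?thesis by (simp only: sum_subtractf[symmetric] right_diff_distrib[symmetric] mm)
  qed
  then show "ext_integral f \<mu>0 = ereal (\<Sum>k<K. (cmod (p k))\<^sup>2 * f (theta (p k)))"
    unfolding ext_integral_def I1 I2
    by (simp add: sum_nonneg)
  define P where "P = (\<lambda>k. theta (p k)) ` {k. k < K \<and> p k \<noteq> 0}"
  have finP: "finite P" by (simp add: P_def)
  have "card P \<le> card {k. k < K \<and> p k \<noteq> 0}" unfolding P_def by (rule card_image_le) simp
  also have "\<dots> \<le> K" using card_mono[of "{..<K}" "{k. k < K \<and> p k \<noteq> 0}"] by auto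
  finally have cP: "card P \<le> K" .
  have PS: "P \<subseteq> S1" by (auto simp: P_def theta_S1)
  have Pc: "closed P" using finP by (rule finite_imp_closed)
  have meas: "S1 - P \<in> sets (restrict_space borel S1)"
    using Pc by (subst sets_restrict_space_iff) auto
  have "emeasure \<mu>0 (S1 - P) = (\<Sum>k<K. ennreal ((cmod (p k))\<^sup>2) * indicator (S1 - P) (theta (p k)))"
    unfolding \<mu>0_def using zS meas by (subst emeasure_atomic) auto
  also have "\<dots> = 0"
    by (intro sum.neutral) (auto simp: P_def indicator_def)
  finally show "\<exists>P. finite P \<and> P \<subseteq> S1 \<and> card P \<le> K \<and> emeasure \<mu>0 (S1 - P) = 0"
    using finP PS cP by blast
qed

end



lemma pw:
  assumes "a \<ge> 0" "b \<ge> 0" "\<alpha> > f t" "\<forall>\<rho>\<ge>0. tm f \<alpha> y t \<rho> \<le> U"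
  shows "a\<^sup>2 * f t - \<alpha> * (a\<^sup>2 + b\<^sup>2 - 2 * a * b * cc y t) \<le> b\<^sup>2 * U"
proof (cases "b = 0")
  case True
  have "a\<^sup>2 * (f t - \<alpha>) \<le> 0" using assms by (simp add: mult_nonneg_nonpos)
  then show ?thesis using True by (simp add: algebra_simps)
next
  case False
  then have b: "b > 0" using assms by simp
  have "tm f \<alpha> y t (a / b) \<le> U" using assms b by simp
  then have "b\<^sup>2 * tm f \<alpha> y t (a / b) \<le> b\<^sup>2 * U" using b by (simp add: mult_left_mono)
  moreover have "b\<^sup>2 * tm f \<alpha> y t (a / b) = a\<^sup>2 * f t - \<alpha> * (a\<^sup>2 + b\<^sup>2 - 2 * a * b * cc y t)"
    using b unfolding tm_def pc_def by (simp add: field_simps power2_eq_square)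
  ultimately show ?thesis by simp
qed

lemma tm_bound:
  assumes "\<alpha> > M" "\<alpha> > 0" "\<forall>y\<in>S1. f y \<le> M" "y \<in> S1" "t \<in> S1" "\<rho> \<ge> 0"
  shows "tm f \<alpha> y t \<rho> \<le> \<alpha>\<^sup>2 / (\<alpha> - M)"
proof -
  define d where "d = \<alpha> - M"
  have d: "d > 0" using assms by (simp add: d_def)
  have "\<rho>\<^sup>2 * f t \<le> \<rho>\<^sup>2 * M" using assms by (simp add: mult_left_mono)
  moreover have "pc y t \<rho> \<ge> \<rho>\<^sup>2 + 1 - 2 * \<rho>"
    using cc_le1[OF assms(4,5)] assms(6) unfolding pc_def by (simp add: mult_left_le)
  ultimately have "tm f \<alpha> y t \<rho> \<le> \<rho>\<^sup>2 * M - \<alpha> * (\<rho>\<^sup>2 + 1 - 2 * \<rho>)"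
    unfolding tm_def using assms(2) by (smt (verit) mult_left_mono)
  also have "\<dots> \<le> \<rho>\<^sup>2 * (M - \<alpha>) + 2 * \<alpha> * \<rho>" using assms(2) by (simp add: algebra_simps)
  also have "\<dots> \<le> \<alpha>\<^sup>2 / d"
  proof -
    have "0 \<le> (d * \<rho> - \<alpha>)\<^sup>2" by simp
    then have "d * (\<rho>\<^sup>2 * (M - \<alpha>) + 2 * \<alpha> * \<rho>) \<le> \<alpha>\<^sup>2"
      unfolding d_def by (simp add: power2_eq_square algebra_simps)
    then show ?thesis using d by (simp add: field_simps mult.commute)
  qed
  finally show ?thesis by (simp add: d_def)
qed

lemma conv_ereal:
  fixes A B c :: ennreal
  assumes "A < \<infinity>" "A + ennreal sm \<le> ennreal \<alpha> * c + ennreal sp + B" "c \<le> ennreal C"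
    "\<alpha> \<ge> 0" "sm \<ge> 0" "sp \<ge> 0" "C \<ge> 0"
  shows "enn2ereal A - enn2ereal B \<le> ereal (\<alpha> * C + sp - sm)"
proof (cases "B = \<infinity>")
  case True
  obtain a where "A = ennreal a" "a \<ge> 0" using assms(1) by (cases A) auto
  then show ?thesis using True by simp
next
  case False
  obtain a where a: "A = ennreal a" "a \<ge> 0" using assms(1) by (cases A) auto
  obtain b where b: "B = ennreal b" "b \<ge> 0" using False by (cases B) auto
  have "ennreal \<alpha> * c \<le> ennreal \<alpha> * ennreal C" using assms(3) by (rule mult_left_mono) simp
  then have "A + ennreal sm \<le> ennreal \<alpha> * ennreal C + ennreal sp + B"
    using assms(2) by (meson add_right_mono order_trans)
  then have "ennreal (a + sm) \<le> ennreal (\<alpha> * C + sp + b)"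
    using a b assms by (simp add: ennreal_plus ennreal_mult)
  then have "a + sm \<le> \<alpha> * C + sp + b"
    using assms a b by (subst (asm) ennreal_le_iff) (auto intro!: add_nonneg_nonneg)
  then show ?thesis using a b by simp
qed

context setting
begin

lemma space_nu: "sets \<nu> = sets (restrict_space borel S1) \<Longrightarrow> space \<nu> = S1"
  by (metis sets_eq_imp_space_eq space_restrict_space2 sets.top borel_closed closed_sphere space_borel)

lemma get_plan:
  assumes "\<nu> \<in> WFR_ball lam \<mu>1" "e > 0"
  shows "\<exists>\<gamma>\<in>Gamma_WFR \<nu> \<mu>1. (\<integral>\<^sup>+ p. ennreal ((cmod (fst p - snd p))\<^sup>2) \<partial>\<gamma>) \<le> ennreal ((lam + e)\<^sup>2)"
proof -
  have "WFR \<nu> \<mu>1 \<le> ennreal lam" using assms by (simp add: WFR_ball_def)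
  also have "\<dots> < ennreal (lam + e)" using assms lam by (simp add: ennreal_lessI)
  finally obtain \<gamma> where g: "\<gamma> \<in> Gamma_WFR \<nu> \<mu>1"
    and lt: "(let c = (\<integral>\<^sup>+ p. ennreal ((cmod (fst p - snd p))\<^sup>2) \<partial>\<gamma>)
       in if c = \<infinity> then \<infinity> else ennreal (sqrt (enn2real c))) < ennreal (lam + e)"
    unfolding WFR_def by (auto simp: INF_less_iff)
  define c where "c = (\<integral>\<^sup>+ p. ennreal ((cmod (fst p - snd p))\<^sup>2) \<partial>\<gamma>)"
  have cinf: "c \<noteq> \<infinity>" using lt by (auto simp: c_def[symmetric] Let_def split: if_splits)
  have "ennreal (sqrt (enn2real c)) < ennreal (lam + e)" using lt cinf by (simp add: c_def[symmetric] Let_def)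
  then have "sqrt (enn2real c) < lam + e" by (subst (asm) ennreal_less_iff) auto
  then have "(sqrt (enn2real c))\<^sup>2 < (lam + e)\<^sup>2"
    by (intro power_strict_mono) auto
  then have "enn2real c < (lam + e)\<^sup>2" by simp
  moreover have "c = ennreal (enn2real c)" using cinf by (simp add: less_top)
  ultimately have "c \<le> ennreal ((lam + e)\<^sup>2)" by (metis ennreal_leI order.strict_implies_order)
  then show ?thesis using g by (auto simp: c_def)
qed

lemma weak_eps:
  fixes \<alpha> M :: real and T :: "nat \<Rightarrow> real"
  assumes \<alpha>: "\<alpha> > 0" "\<alpha> > M" and fM: "\<forall>y\<in>S1. f y \<le> M"
    and T: "\<forall>j<N. \<forall>t\<in>S1. \<forall>\<rho>\<ge>0. tm f \<alpha> (x j) t \<rho> \<le> T j"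
    and \<nu>: "\<nu> \<in> WFR_ball lam \<mu>1" and e: "e > 0"
  shows "ext_integral f \<nu> \<le> ereal (\<alpha> * (lam + e)\<^sup>2 + (\<Sum>j<N. r j * T j))"
proof -
  note fst_meas[measurable] snd_meas[measurable]
  define Tb where "Tb = \<alpha>\<^sup>2 / (\<alpha> - M)"
  define Tt where "Tt y = Tb + (\<Sum>j<N. (T j - Tb) * indicator {x j} y)" for y
  have Tt_x: "Tt (x j) = T j" if j: "j < N" for j
  proof -
    have "(\<Sum>i<N. (T i - Tb) * indicator {x i} (x j)) = (\<Sum>i<N. if i = j then T i - Tb else 0)"
      using atoms_distinct j by (intro sum.cong refl) (auto simp: indicator_def inj_on_def)
    also have "\<dots> = T j - Tb" using j by simp
    finally show ?thesis by (simp add: Tt_def)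
  qed
  have Tt_o: "Tt y = Tb" if "y \<notin> x ` {..<N}" for y
    using that by (auto simp: Tt_def indicator_def intro!: sum.neutral)
  have Tt_b: "tm f \<alpha> y t \<rho> \<le> Tt y" if "y \<in> S1" "t \<in> S1" "\<rho> \<ge> 0" for y t \<rho>
  proof (cases "y \<in> x ` {..<N}")
    case True
    then obtain j where "j < N" "y = x j" by auto
    then show ?thesis using T that Tt_x by auto
  next
    case False
    then show ?thesis using Tt_o tm_bound[OF \<alpha>(2,1) fM that] by (simp add: Tb_def)
  qed
  have Tt_meas: "Tt \<in> borel_measurable (restrict_space borel S1)"
  proof -
    have "Tt \<in> borel_measurable borel" unfolding Tt_def by (intro borel_measurable_add borel_measurable_sum borel_measurable_times borel_measurable_indicator) (auto simp: borel_closed)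
    then show ?thesis by (rule measurable_restrict_space1)
  qed
  have key: "ennreal ((cmod (fst z))\<^sup>2) * ennreal (f (theta (fst z))) + ennreal ((cmod (snd z))\<^sup>2) * ennreal (- Tt (theta (snd z)))
     \<le> ennreal \<alpha> * ennreal ((cmod (fst z - snd z))\<^sup>2) + ennreal ((cmod (snd z))\<^sup>2) * ennreal (Tt (theta (snd z)))
        + ennreal ((cmod (fst z))\<^sup>2) * ennreal (- f (theta (fst z)))" for z
  proof -
    define a where "a = cmod (fst z)"
    define b where "b = cmod (snd z)"
    define t where "t = theta (fst z)"
    define y where "y = theta (snd z)"
    have D: "(cmod (fst z - snd z))\<^sup>2 = a\<^sup>2 + b\<^sup>2 - 2 * a * b * cc y t"
      unfolding a_def b_def t_def y_def by (rule norm_diff_theta)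
    have tS: "t \<in> S1" "y \<in> S1" by (auto simp: t_def y_def theta_S1)
    have "a\<^sup>2 * f t - \<alpha> * (a\<^sup>2 + b\<^sup>2 - 2 * a * b * cc y t) \<le> b\<^sup>2 * Tt y"
    proof (rule pw)
      show "f t < \<alpha>" using fM tS(1) \<alpha>(2) by (meson le_less_trans)
      show "\<forall>\<rho>\<ge>0. tm f \<alpha> y t \<rho> \<le> Tt y" using Tt_b tS by blast
    qed (auto simp: a_def b_def)
    then have ineq': "a\<^sup>2 * f t - \<alpha> * (cmod (fst z - snd z))\<^sup>2 \<le> b\<^sup>2 * Tt y" unfolding D .
    have h1: "max (f t) 0 = f t + max (- f t) 0" by auto
    have h2: "max (Tt y) 0 = Tt y + max (- Tt y) 0" by auto
    have R: "a\<^sup>2 * max (f t) 0 + b\<^sup>2 * max (- Tt y) 0 \<le> \<alpha> * (cmod (fst z - snd z))\<^sup>2 + b\<^sup>2 * max (Tt y) 0 + a\<^sup>2 * max (- f t) 0"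
      unfolding h1 h2 distrib_left using ineq' by linarith
    have "ennreal (a\<^sup>2) * ennreal (f t) + ennreal (b\<^sup>2) * ennreal (- Tt y) = ennreal (a\<^sup>2 * max (f t) 0 + b\<^sup>2 * max (- Tt y) 0)"
      by (simp add: ennreal_plus ennreal_mult' ennreal_max_0)
    also have "\<dots> \<le> ennreal (\<alpha> * (cmod (fst z - snd z))\<^sup>2 + b\<^sup>2 * max (Tt y) 0 + a\<^sup>2 * max (- f t) 0)"
      using R by (rule ennreal_leI)
    also have "\<dots> = ennreal \<alpha> * ennreal ((cmod (fst z - snd z))\<^sup>2) + ennreal (b\<^sup>2) * ennreal (Tt y) + ennreal (a\<^sup>2) * ennreal (- f t)"
      using \<alpha> by (simp add: ennreal_plus ennreal_mult' ennreal_max_0 ennreal_mult)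
    finally show ?thesis by (simp add: a_def b_def t_def y_def)
  qed
  obtain \<gamma> where \<gamma>: "\<gamma> \<in> Gamma_WFR \<nu> \<mu>1"
    and cst: "(\<integral>\<^sup>+ p. ennreal ((cmod (fst p - snd p))\<^sup>2) \<partial>\<gamma>) \<le> ennreal ((lam + e)\<^sup>2)"
    using get_plan[OF \<nu> e] by blast
  have sg: "sets \<gamma> = sets borel" using \<gamma> by (simp add: Gamma_WFR_def)
  have mg: "h \<in> borel_measurable \<gamma>" if "h \<in> borel_measurable (borel :: (complex\<times>complex) measure)" for h :: "_ \<Rightarrow> ennreal"
    using that measurable_cong_sets[OF sg refl] by blast
  have s\<nu>: "sets \<nu> = sets (restrict_space borel S1)" using \<nu> by (simp add: WFR_ball_def Mplus_S1_def)
  have fp: "(\<lambda>y. ennreal (f y)) \<in> borel_measurable (restrict_space borel S1)" using f_meas by measurable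
  have fm: "(\<lambda>y. ennreal (- f y)) \<in> borel_measurable (restrict_space borel S1)" using f_meas by measurable
  have Tp: "(\<lambda>y. ennreal (Tt y)) \<in> borel_measurable (restrict_space borel S1)" using Tt_meas by measurable
  have Tm: "(\<lambda>y. ennreal (- Tt y)) \<in> borel_measurable (restrict_space borel S1)" using Tt_meas by measurable
  have cf: "(\<lambda>z. g (theta (fst z))) \<in> borel_measurable (borel :: (complex\<times>complex) measure)"
    if "g \<in> borel_measurable (restrict_space borel S1)" for g :: "complex \<Rightarrow> ennreal"
    using measurable_compose[OF theta_fst_meas that] .
  have cs: "(\<lambda>z. g (theta (snd z))) \<in> borel_measurable (borel :: (complex\<times>complex) measure)"
    if "g \<in> borel_measurable (restrict_space borel S1)" for g :: "complex \<Rightarrow> ennreal"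
    using measurable_compose[OF theta_snd_meas that] .
  have nf: "(\<lambda>z. ennreal ((cmod (fst z))\<^sup>2)) \<in> borel_measurable (borel :: (complex\<times>complex) measure)" by measurable
  have ns: "(\<lambda>z. ennreal ((cmod (snd z))\<^sup>2)) \<in> borel_measurable (borel :: (complex\<times>complex) measure)" by measurable
  have nd: "(\<lambda>z. ennreal ((cmod (fst z - snd z))\<^sup>2)) \<in> borel_measurable (borel :: (complex\<times>complex) measure)" by measurable
  define A where "A = (\<integral>\<^sup>+ y. ennreal (f y) \<partial>\<nu>)"
  define B where "B = (\<integral>\<^sup>+ y. ennreal (- f y) \<partial>\<nu>)"
  define c where "c = (\<integral>\<^sup>+ p. ennreal ((cmod (fst p - snd p))\<^sup>2) \<partial>\<gamma>)"
  define sp where "sp = (\<Sum>j<N. r j * max (T j) 0)"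
  define sm where "sm = (\<Sum>j<N. r j * max (- T j) 0)"
  have int_mu1: "(\<integral>\<^sup>+ y. ennreal (s * Tt y) \<partial>\<mu>1) = ennreal (\<Sum>j<N. r j * max (s * T j) 0)"
    if s: "s = 1 \<or> s = -1" for s
  proof -
    have gm: "(\<lambda>y. ennreal (s * Tt y)) \<in> borel_measurable (restrict_space borel S1)" using Tt_meas by measurable
    have "(\<integral>\<^sup>+ y. ennreal (s * Tt y) \<partial>\<mu>1) = (\<Sum>j<N. ennreal (r j) * ennreal (s * Tt (x j)))"
      unfolding mu1_atomic by (rule nn_integral_atomic[OF atoms_on gm])
    also have "\<dots> = (\<Sum>j<N. ennreal (r j * max (s * T j) 0))"
      using weights_pos by (intro sum.cong refl) (simp add: Tt_x ennreal_mult' ennreal_max_0 less_imp_le)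
    also have "\<dots> = ennreal (\<Sum>j<N. r j * max (s * T j) 0)"
      using weights_pos by (intro sum_ennreal) (simp add: less_imp_le)
    finally show ?thesis .
  qed
  have "(\<integral>\<^sup>+ z. ennreal ((cmod (fst z))\<^sup>2) * ennreal (f (theta (fst z))) + ennreal ((cmod (snd z))\<^sup>2) * ennreal (- Tt (theta (snd z))) \<partial>\<gamma>)
     \<le> (\<integral>\<^sup>+ z. ennreal \<alpha> * ennreal ((cmod (fst z - snd z))\<^sup>2) + ennreal ((cmod (snd z))\<^sup>2) * ennreal (Tt (theta (snd z)))
        + ennreal ((cmod (fst z))\<^sup>2) * ennreal (- f (theta (fst z))) \<partial>\<gamma>)"
    by (rule nn_integral_mono) (rule key)
  also have "(\<integral>\<^sup>+ z. ennreal ((cmod (fst z))\<^sup>2) * ennreal (f (theta (fst z))) + ennreal ((cmod (snd z))\<^sup>2) * ennreal (- Tt (theta (snd z))) \<partial>\<gamma>)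
     = (\<integral>\<^sup>+ z. ennreal ((cmod (fst z))\<^sup>2) * ennreal (f (theta (fst z))) \<partial>\<gamma>) + (\<integral>\<^sup>+ z. ennreal ((cmod (snd z))\<^sup>2) * ennreal (- Tt (theta (snd z))) \<partial>\<gamma>)"
    by (intro nn_integral_add mg borel_measurable_times_ennreal nf ns cf cs fp Tm)
  also have "(\<integral>\<^sup>+ z. ennreal \<alpha> * ennreal ((cmod (fst z - snd z))\<^sup>2) + ennreal ((cmod (snd z))\<^sup>2) * ennreal (Tt (theta (snd z)))
        + ennreal ((cmod (fst z))\<^sup>2) * ennreal (- f (theta (fst z))) \<partial>\<gamma>)
     = ennreal \<alpha> * c + (\<integral>\<^sup>+ z. ennreal ((cmod (snd z))\<^sup>2) * ennreal (Tt (theta (snd z))) \<partial>\<gamma>)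
        + (\<integral>\<^sup>+ z. ennreal ((cmod (fst z))\<^sup>2) * ennreal (- f (theta (fst z))) \<partial>\<gamma>)"
    unfolding c_def
    by (subst nn_integral_add, (intro mg borel_measurable_times_ennreal borel_measurable_add nf ns nd cf cs fm Tp borel_measurable_const)+,
        subst nn_integral_add, (intro mg borel_measurable_times_ennreal borel_measurable_add nf ns nd cf cs fm Tp borel_measurable_const)+,
        subst nn_integral_cmult, (intro mg nd)+, simp)
  finally have ineq: "(\<integral>\<^sup>+ z. ennreal ((cmod (fst z))\<^sup>2) * ennreal (f (theta (fst z))) \<partial>\<gamma>) + (\<integral>\<^sup>+ z. ennreal ((cmod (snd z))\<^sup>2) * ennreal (- Tt (theta (snd z))) \<partial>\<gamma>)
     \<le> ennreal \<alpha> * c + (\<integral>\<^sup>+ z. ennreal ((cmod (snd z))\<^sup>2) * ennreal (Tt (theta (snd z))) \<partial>\<gamma>)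
        + (\<integral>\<^sup>+ z. ennreal ((cmod (fst z))\<^sup>2) * ennreal (- f (theta (fst z))) \<partial>\<gamma>)" .
  have e1: "(\<integral>\<^sup>+ z. ennreal ((cmod (fst z))\<^sup>2) * ennreal (f (theta (fst z))) \<partial>\<gamma>) = A"
    unfolding A_def by (rule transfer_fst[OF \<gamma> s\<nu> fp, symmetric])
  have e2: "(\<integral>\<^sup>+ z. ennreal ((cmod (fst z))\<^sup>2) * ennreal (- f (theta (fst z))) \<partial>\<gamma>) = B"
    unfolding B_def by (rule transfer_fst[OF \<gamma> s\<nu> fm, symmetric])
  have e3: "(\<integral>\<^sup>+ z. ennreal ((cmod (snd z))\<^sup>2) * ennreal (Tt (theta (snd z))) \<partial>\<gamma>) = ennreal sp"
    using transfer_snd[OF \<gamma> mu1_sets Tp] int_mu1[of 1] by (simp add: sp_def)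
  have e4: "(\<integral>\<^sup>+ z. ennreal ((cmod (snd z))\<^sup>2) * ennreal (- Tt (theta (snd z))) \<partial>\<gamma>) = ennreal sm"
    using transfer_snd[OF \<gamma> mu1_sets Tm] int_mu1[of "-1"] by (simp add: sm_def)
  have ineq2: "A + ennreal sm \<le> ennreal \<alpha> * c + ennreal sp + B"
    using ineq unfolding e1 e2 e3 e4 .
  have Afin: "A < \<infinity>"
  proof -
    have "A \<le> (\<integral>\<^sup>+ y. ennreal (max M 0) \<partial>\<nu>)"
      unfolding A_def using fM space_nu[OF s\<nu>] by (intro nn_integral_mono) (auto intro!: ennreal_leI)
    also have "\<dots> = ennreal (max M 0) * emeasure \<nu> S1" using space_nu[OF s\<nu>] by simp
    also have "\<dots> < \<infinity>" using \<nu> by (simp add: WFR_ball_def Mplus_S1_def ennreal_mult_less_top)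
    finally show ?thesis .
  qed
  have "enn2ereal A - enn2ereal B \<le> ereal (\<alpha> * (lam + e)\<^sup>2 + sp - sm)"
    by (rule conv_ereal[OF Afin ineq2 cst[folded c_def]]) (use \<alpha> weights_pos in \<open>auto simp: sp_def sm_def intro!: sum_nonneg\<close>)
  moreover have "sp - sm = (\<Sum>j<N. r j * T j)"
  proof -
    have mm: "\<And>a::real. max a 0 - max (- a) 0 = a" by auto
    show ?thesis unfolding sp_def sm_def by (simp only: sum_subtractf[symmetric] right_diff_distrib[symmetric] mm)
  qed
  ultimately show ?thesis unfolding ext_integral_def A_def B_def by (simp add: algebra_simps)
qed

end



lemma tm_le:
  assumes "\<alpha> > 0" "\<forall>y\<in>S1. f y \<le> M" "y \<in> S1" "t \<in> S1" "\<rho> \<ge> 0"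
  shows "tm f \<alpha> y t \<rho> \<le> \<rho>\<^sup>2 * (M - \<alpha>) + 2 * \<alpha> * \<rho> - \<alpha>"
proof -
  have "\<rho>\<^sup>2 * f t \<le> \<rho>\<^sup>2 * M" using assms by (simp add: mult_left_mono)
  moreover have "pc y t \<rho> \<ge> \<rho>\<^sup>2 + 1 - 2 * \<rho>"
    using cc_le1[OF assms(3,4)] assms(5) unfolding pc_def by (simp add: mult_left_le)
  ultimately have "tm f \<alpha> y t \<rho> \<le> \<rho>\<^sup>2 * M - \<alpha> * (\<rho>\<^sup>2 + 1 - 2 * \<rho>)"
    unfolding tm_def using assms(1) by (smt (verit) mult_left_mono)
  then show ?thesis by (simp add: algebra_simps)
qed

lemma tm_big:
  assumes "\<alpha> > 0" "\<alpha> > M" "\<forall>y\<in>S1. f y \<le> M" "y \<in> S1" "t \<in> S1" "\<rho> > 2 * \<alpha> / (\<alpha> - M)"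
  shows "tm f \<alpha> y t \<rho> < - \<alpha>"
proof -
  have d: "\<alpha> - M > 0" using assms by simp
  have r0: "\<rho> > 0" using assms(6) d assms(1) by (smt (verit) divide_pos_pos)
  have "\<rho> * (\<alpha> - M) > 2 * \<alpha>" using assms(6) d by (simp add: field_simps)
  then have "\<rho> * (\<rho> * (\<alpha> - M)) > \<rho> * (2 * \<alpha>)" using r0 by simp
  then have "\<rho>\<^sup>2 * (M - \<alpha>) + 2 * \<alpha> * \<rho> < 0" by (simp add: power2_eq_square algebra_simps)
  then show ?thesis using tm_le[OF assms(1,3,4,5) less_imp_le[OF r0]] by linarith
qed

lemma tm_zero: "tm f \<alpha> y t 0 = - \<alpha>" by (simp add: tm_def pc_def)
lemma tm_self: "y \<in> S1 \<Longrightarrow> tm f \<alpha> y y 1 = f y" by (simp add: tm_def pc_def cc_self)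

lemma usc_sq:
  fixes f :: "complex \<Rightarrow> real" and e \<rho> :: real
  assumes fusc: "\<And>s l e. s \<longlonglongrightarrow> l \<Longrightarrow> \<forall>n. s n \<in> S1 \<Longrightarrow> l \<in> S1 \<Longrightarrow> e > 0 \<Longrightarrow> eventually (\<lambda>n. f (s n) < f l + e) sequentially"
    and t: "tn \<longlonglongrightarrow> t" "\<forall>n. tn n \<in> S1" "t \<in> S1" and r: "rn \<longlonglongrightarrow> \<rho>" and e: "e > 0"
  shows "eventually (\<lambda>n. (rn n)\<^sup>2 * f (tn n) < \<rho>\<^sup>2 * f t + e) sequentially"
proof -
  define \<delta> where "\<delta> = e / (2 * (\<rho>\<^sup>2 + 1))"
  have "2 * (\<rho>\<^sup>2 + 1) > 0" by (smt (verit) zero_le_power2)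
  then have \<delta>: "\<delta> > 0" using e unfolding \<delta>_def by (rule divide_pos_pos[rotated])
  have \<delta>2: "\<rho>\<^sup>2 * \<delta> < e / 2"
  proof -
    have "\<rho>\<^sup>2 * \<delta> = e / 2 * (\<rho>\<^sup>2 / (\<rho>\<^sup>2 + 1))" by (simp add: \<delta>_def field_simps)
    also have "\<dots> < e / 2 * 1"
    proof (intro mult_strict_left_mono)
      have p1: "\<rho>\<^sup>2 + 1 > 0" by (smt (verit) zero_le_power2)
      then show "\<rho>\<^sup>2 / (\<rho>\<^sup>2 + 1) < 1" by (simp add: divide_less_eq_1_pos)
    qed (use e in simp)
    finally show ?thesis by simp
  qed
  have ev1: "eventually (\<lambda>n. f (tn n) < f t + \<delta>) sequentially" using fusc[OF t \<delta>] .
  have "(\<lambda>n. (rn n)\<^sup>2 * (f t + \<delta>)) \<longlonglongrightarrow> \<rho>\<^sup>2 * (f t + \<delta>)" using r by (intro tendsto_intros)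
  moreover have "\<rho>\<^sup>2 * (f t + \<delta>) < \<rho>\<^sup>2 * f t + \<delta> * \<rho>\<^sup>2 + e / 2" using e by (simp add: algebra_simps)
  ultimately have ev2: "eventually (\<lambda>n. (rn n)\<^sup>2 * (f t + \<delta>) < \<rho>\<^sup>2 * f t + \<delta> * \<rho>\<^sup>2 + e / 2) sequentially"
    by (rule order_tendstoD)
  from ev1 ev2 show ?thesis
  proof eventually_elim
    case (elim n)
    have "(rn n)\<^sup>2 * f (tn n) \<le> (rn n)\<^sup>2 * (f t + \<delta>)" using elim(1) by (intro mult_left_mono) auto
    then show ?case using elim(2) \<delta>2 by (simp add: mult.commute)
  qed
qed

lemma ereal_eps_weak:
  assumes "\<alpha> > 0" "lam \<ge> 0" "\<And>e. e > 0 \<Longrightarrow> X \<le> ereal (\<alpha> * (lam + e)\<^sup>2 + S)"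
  shows "X \<le> ereal (\<alpha> * lam\<^sup>2 + S)"
proof (rule ereal_le_epsilon2)
  fix e :: real assume e: "e > 0"
  define \<epsilon> where "\<epsilon> = min 1 (e / (\<alpha> * (2 * lam + 1)))"
  have pos: "\<alpha> * (2 * lam + 1) > 0" using assms by simp
  have \<epsilon>: "\<epsilon> > 0" "\<epsilon> \<le> 1" "\<epsilon> \<le> e / (\<alpha> * (2 * lam + 1))" using e pos by (auto simp: \<epsilon>_def)
  have "\<alpha> * (lam + \<epsilon>)\<^sup>2 = \<alpha> * lam\<^sup>2 + \<alpha> * \<epsilon> * (2 * lam + \<epsilon>)" by (simp add: power2_eq_square algebra_simps)
  also have "\<dots> \<le> \<alpha> * lam\<^sup>2 + \<alpha> * \<epsilon> * (2 * lam + 1)"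
    using \<epsilon> assms by (intro add_left_mono mult_left_mono) auto
  also have "\<alpha> * \<epsilon> * (2 * lam + 1) \<le> e"
  proof -
    have "\<epsilon> * (\<alpha> * (2 * lam + 1)) \<le> e" using \<epsilon>(3) pos by (simp add: field_simps)
    then show ?thesis by (simp add: algebra_simps)
  qed
  finally have "\<alpha> * (lam + \<epsilon>)\<^sup>2 \<le> \<alpha> * lam\<^sup>2 + e" by simp
  then show "X \<le> ereal (\<alpha> * lam\<^sup>2 + S) + ereal e" using assms(3)[OF \<epsilon>(1)]
    by (smt (verit) ereal_less_eq(3) order_trans plus_ereal.simps(1))
qed

lemma common_subseq:
  fixes s :: "nat \<Rightarrow> nat \<Rightarrow> 'a::metric_space"
  assumes K: "compact K" and s: "\<And>n j. j < N \<Longrightarrow> s n j \<in> K"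
  shows "\<exists>r l. strict_mono r \<and> (\<forall>j<N. l j \<in> K \<and> (\<lambda>n. s (r n) j) \<longlonglongrightarrow> l j)"
  using s
proof (induction N)
  case 0
  show ?case by (rule exI[of _ id]) (auto simp: strict_mono_def)
next
  case (Suc N)
  from Suc.IH Suc.prems obtain r l where r: "strict_mono r" and l: "\<forall>j<N. l j \<in> K \<and> (\<lambda>n. s (r n) j) \<longlonglongrightarrow> l j"
    by (metis less_SucI)
  have "\<forall>n. s (r n) N \<in> K" using Suc.prems by simp
  from seq_compactE[OF compact_imp_seq_compact[OF K] this] obtain a r' where
    a: "a \<in> K" "strict_mono r'" "((\<lambda>n. s (r n) N) \<circ> r') \<longlonglongrightarrow> a" by blast
  define l' where "l' = l(N := a)"
  have "strict_mono (r \<circ> r')" using r a(2) by (simp add: strict_mono_def)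
  moreover have "\<forall>j<Suc N. l' j \<in> K \<and> (\<lambda>n. s ((r \<circ> r') n) j) \<longlonglongrightarrow> l' j"
  proof (intro allI impI)
    fix j assume j: "j < Suc N"
    show "l' j \<in> K \<and> (\<lambda>n. s ((r \<circ> r') n) j) \<longlonglongrightarrow> l' j"
    proof (cases "j = N")
      case True then show ?thesis using a by (simp add: l'_def o_def)
    next
      case False
      then have "j < N" using j by simp
      then have "l j \<in> K" "(\<lambda>n. s (r n) j) \<longlonglongrightarrow> l j" using l by auto
      from LIMSEQ_subseq_LIMSEQ[OF this(2) a(2)] this(1) False show ?thesis by (simp add: l'_def o_def)
    qed
  qed
  ultimately show ?case by blast
qed




context setting
begin

definition opt :: "real \<Rightarrow> nat \<Rightarrow> complex \<Rightarrow> real \<Rightarrow> bool" where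
  "opt \<alpha> j t \<rho> \<longleftrightarrow> t \<in> S1 \<and> \<rho> \<ge> 0 \<and> (\<forall>t'\<in>S1. \<forall>\<rho>'\<ge>0. tm f \<alpha> (x j) t' \<rho>' \<le> tm f \<alpha> (x j) t \<rho>)"

lemma weak:
  fixes \<alpha> M :: real and T :: "nat \<Rightarrow> real"
  assumes \<alpha>: "\<alpha> > 0" "\<alpha> > M" and fM: "\<forall>y\<in>S1. f y \<le> M"
    and T: "\<forall>j<N. \<forall>t\<in>S1. \<forall>\<rho>\<ge>0. tm f \<alpha> (x j) t \<rho> \<le> T j"
    and \<nu>: "\<nu> \<in> WFR_ball lam \<mu>1"
  shows "ext_integral f \<nu> \<le> ereal (\<alpha> * lam\<^sup>2 + (\<Sum>j<N. r j * T j))"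
  by (rule ereal_eps_weak[OF \<alpha>(1) lam]) (rule weak_eps[OF \<alpha> fM T \<nu>])

lemma weak_opt:
  assumes \<alpha>: "\<alpha> > 0" "\<alpha> > M" and fM: "\<forall>y\<in>S1. f y \<le> M"
    and o: "\<forall>j<N. opt \<alpha> j (t j) (\<rho> j)"
    and \<nu>: "\<nu> \<in> WFR_ball lam \<mu>1"
  shows "ext_integral f \<nu> \<le> ereal (\<alpha> * lam\<^sup>2 + (\<Sum>j<N. r j * tm f \<alpha> (x j) (t j) (\<rho> j)))"
  by (rule weak[OF \<alpha> fM _ \<nu>]) (use o in \<open>auto simp: opt_def\<close>)

lemma tm_usc:
  assumes an: "an \<longlonglongrightarrow> \<alpha>" and tn: "tn \<longlonglongrightarrow> t" "\<forall>n. tn n \<in> S1" "t \<in> S1" and rn: "rn \<longlonglongrightarrow> \<rho>"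
    and e: "e > 0"
  shows "eventually (\<lambda>n. tm f (an n) y (tn n) (rn n) < tm f \<alpha> y t \<rho> + e) sequentially"
proof -
  have ev1: "eventually (\<lambda>n. (rn n)\<^sup>2 * f (tn n) < \<rho>\<^sup>2 * f t + e / 2) sequentially"
    by (rule usc_sq[OF usc_seq tn rn]) (use e in auto)
  have "(\<lambda>n. an n * pc y (tn n) (rn n)) \<longlonglongrightarrow> \<alpha> * pc y t \<rho>"
    unfolding pc_def cc_def using an tn(1) rn by (intro tendsto_intros)
  moreover have "\<alpha> * pc y t \<rho> - e / 2 < \<alpha> * pc y t \<rho>" using e by simp
  ultimately have ev2: "eventually (\<lambda>n. an n * pc y (tn n) (rn n) > \<alpha> * pc y t \<rho> - e / 2) sequentially"
    by (rule order_tendstoD)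
  from ev1 ev2 show ?thesis by eventually_elim (simp add: tm_def)
qed

lemma opt_exists:
  assumes \<alpha>: "\<alpha> > 0" "\<alpha> > M" and fM: "\<forall>y\<in>S1. f y \<le> M" and j: "j < N"
  shows "\<exists>t \<rho>. opt \<alpha> j t \<rho>"
proof -
  define R0 where "R0 = 2 * \<alpha> / (\<alpha> - M)"
  have R0: "R0 \<ge> 0" using \<alpha> by (simp add: R0_def)
  have xj: "x j \<in> S1" using atoms_on j by simp
  define K where "K = S1 \<times> {0..R0}"
  define g where "g = (\<lambda>z. tm f \<alpha> (x j) (fst z) (snd z))"
  have "\<exists>z\<in>K. \<forall>w\<in>K. g w \<le> g z"
  proof (rule usc_max_gen)
    show "compact K" unfolding K_def by (intro compact_Times compact_sphere compact_Icc)
    show "K \<noteq> {}" using xj R0 by (auto simp: K_def)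
    fix s l and e :: real
    assume s: "\<forall>n. s n \<in> K" "s \<longlonglongrightarrow> l" "l \<in> K" "e > 0"
    have "(\<lambda>n. fst (s n)) \<longlonglongrightarrow> fst l" "(\<lambda>n. snd (s n)) \<longlonglongrightarrow> snd l"
      using s(2) by (auto intro: tendsto_fst tendsto_snd)
    moreover have "\<forall>n. fst (s n) \<in> S1" "fst l \<in> S1" using s(1,3) by (auto simp: K_def mem_Times_iff)
    ultimately show "eventually (\<lambda>n. g (s n) < g l + e) sequentially"
      unfolding g_def using tm_usc[OF tendsto_const, of "\<lambda>n. fst (s n)" "fst l" "\<lambda>n. snd (s n)" "snd l" e \<alpha> "x j"] s(4)
      by blast
  qed
  then obtain z where z: "z \<in> K" "\<And>w. w \<in> K \<Longrightarrow> g w \<le> g z" by blast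
  have "opt \<alpha> j (fst z) (snd z)"
    unfolding opt_def
  proof (intro conjI ballI allI impI)
    show "fst z \<in> S1" "snd z \<ge> 0" using z(1) by (auto simp: K_def mem_Times_iff)
    fix t' and \<rho>' :: real assume t': "t' \<in> S1" and \<rho>': "\<rho>' \<ge> 0"
    have gz: "g z \<ge> - \<alpha>" using z(2)[of "(x j, 0)"] xj R0 by (simp add: K_def g_def tm_zero)
    show "tm f \<alpha> (x j) t' \<rho>' \<le> tm f \<alpha> (x j) (fst z) (snd z)"
    proof (cases "\<rho>' \<le> R0")
      case True
      then show ?thesis using z(2)[of "(t', \<rho>')"] t' \<rho>' by (simp add: K_def g_def)
    next
      case False
      then have "tm f \<alpha> (x j) t' \<rho>' < - \<alpha>" using tm_big[OF \<alpha> fM xj t'] by (simp add: R0_def)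
      then show ?thesis using gz by (simp add: g_def)
    qed
  qed
  then show ?thesis by blast
qed

lemma opt_limit:
  assumes an: "an \<longlonglongrightarrow> \<alpha>" and o: "\<forall>n. opt (an n) j (tn n) (rn n)"
    and tn: "tn \<longlonglongrightarrow> t" and rn: "rn \<longlonglongrightarrow> \<rho>"
  shows "opt \<alpha> j t \<rho>"
proof -
  have tS: "\<forall>n. tn n \<in> S1" and rnn: "\<forall>n. rn n \<ge> 0" using o by (auto simp: opt_def)
  have t: "t \<in> S1"
    using closed_sphere tn tS by (metis closed_sequentially)
  have \<rho>: "\<rho> \<ge> 0" using rn rnn by (intro LIMSEQ_le_const) auto
  show ?thesis unfolding opt_def
  proof (intro conjI ballI allI impI t \<rho>)
    fix t' and \<rho>' :: real assume t': "t' \<in> S1" and \<rho>': "\<rho>' \<ge> 0"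
    show "tm f \<alpha> (x j) t' \<rho>' \<le> tm f \<alpha> (x j) t \<rho>"
    proof (rule field_le_epsilon)
      fix e :: real assume e: "e > 0"
      have lim: "(\<lambda>n. tm f (an n) (x j) t' \<rho>') \<longlonglongrightarrow> tm f \<alpha> (x j) t' \<rho>'"
        unfolding tm_def using an by (intro tendsto_intros)
      have ev: "eventually (\<lambda>n. tm f (an n) (x j) (tn n) (rn n) < tm f \<alpha> (x j) t \<rho> + e) sequentially"
        by (rule tm_usc[OF an tn tS t rn e])
      have "eventually (\<lambda>n. tm f (an n) (x j) t' \<rho>' \<le> tm f \<alpha> (x j) t \<rho> + e) sequentially"
        using ev
      proof eventually_elim
        case (elim n)
        have "tm f (an n) (x j) t' \<rho>' \<le> tm f (an n) (x j) (tn n) (rn n)" using o t' \<rho>' by (auto simp: opt_def)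
        then show ?case using elim by simp
      qed
      then show "tm f \<alpha> (x j) t' \<rho>' \<le> tm f \<alpha> (x j) t \<rho> + e"
        by (rule tendsto_upperbound[OF lim]) simp
    qed
  qed
qed

lemma opt_rho_bound:
  assumes \<alpha>: "\<alpha> > 0" "\<alpha> > M" and fM: "\<forall>y\<in>S1. f y \<le> M" and j: "j < N" and o: "opt \<alpha> j t \<rho>"
  shows "\<rho> \<le> 2 * \<alpha> / (\<alpha> - M)"
proof (rule ccontr)
  assume "\<not> ?thesis"
  then have "tm f \<alpha> (x j) t \<rho> < - \<alpha>" using tm_big[OF \<alpha> fM _ _] atoms_on j o by (auto simp: opt_def)
  moreover have "tm f \<alpha> (x j) (x j) 0 \<le> tm f \<alpha> (x j) t \<rho>" using o atoms_on j by (auto simp: opt_def)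
  ultimately show False by (simp add: tm_zero)
qed

lemma opt_pc_bound:
  assumes Mp: "M \<ge> 0" and fM: "\<forall>y\<in>S1. f y \<le> M" and j: "j < N" and o: "opt \<alpha> j t \<rho>"
  shows "(\<alpha> - 2 * M) * pc (x j) t \<rho> \<le> 2 * M - f (x j)"
proof -
  have xj: "x j \<in> S1" using atoms_on j by simp
  have tS: "t \<in> S1" and r: "\<rho> \<ge> 0" using o by (auto simp: opt_def)
  have "tm f \<alpha> (x j) (x j) 1 \<le> tm f \<alpha> (x j) t \<rho>" using o xj unfolding opt_def by simp
  then have "f (x j) \<le> tm f \<alpha> (x j) t \<rho>" using tm_self[OF xj] by simp
  moreover have "\<rho>\<^sup>2 * f t \<le> \<rho>\<^sup>2 * M" using fM tS by (simp add: mult_left_mono)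
  moreover have "\<rho>\<^sup>2 * M \<le> (2 * pc (x j) t \<rho> + 2) * M" using rho_sq_le[OF xj tS r] Mp by (rule mult_right_mono)
  ultimately show ?thesis unfolding tm_def by (simp add: algebra_simps)
qed

end



lemma theta_scale: "a > 0 \<Longrightarrow> s \<in> S1 \<Longrightarrow> theta (complex_of_real a * s) = s"
  by (cases "s = 0") (auto simp: theta_def norm_mult)

lemma atom_obj: "a \<ge> 0 \<Longrightarrow> s \<in> S1 \<Longrightarrow>
   (cmod (complex_of_real a * s))\<^sup>2 * f (theta (complex_of_real a * s)) = a\<^sup>2 * f s"
  by (cases "a = 0") (auto simp: theta_scale norm_mult)

lemma atom_ind: "b \<ge> 0 \<Longrightarrow> y \<in> S1 \<Longrightarrow>
   (cmod (complex_of_real b * y))\<^sup>2 * indicator A (theta (complex_of_real b * y)) = b\<^sup>2 * (indicator A y :: real)"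
  by (cases "b = 0") (auto simp: theta_scale norm_mult)

lemma atom_cost: "u \<ge> 0 \<Longrightarrow> \<rho> \<ge> 0 \<Longrightarrow> s \<in> S1 \<Longrightarrow> y \<in> S1 \<Longrightarrow>
   (cmod (complex_of_real (sqrt u * \<rho>) * s - complex_of_real (sqrt u) * y))\<^sup>2 = u * pc y s \<rho>"
  by (subst norm_diff_sq) (auto simp: pc_def power_mult_distrib algebra_simps power2_eq_square[symmetric])

context setting
begin

lemma plan_cfg:
  fixes t :: "nat \<Rightarrow> complex" and \<rho> :: "nat \<Rightarrow> real" and k :: nat and w :: real
    and te tc :: complex and \<rho>e m :: real
  assumes t: "\<forall>j<N. t j \<in> S1 \<and> \<rho> j \<ge> 0" and w: "0 \<le> w" "w \<le> 1" "w = 0 \<or> k < N"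
    and te: "te \<in> S1" "\<rho>e \<ge> 0" and tc: "tc \<in> S1" "m \<ge> 0"
    and cost: "(\<Sum>j<N. (r j - (if j = k then w * r k else 0)) * pc (x j) (t j) (\<rho> j)) + w * r k * pc (x k) te \<rho>e + m \<le> lam\<^sup>2"
  shows "\<exists>\<mu>0 \<in> WFR_ball lam \<mu>1. ext_integral f \<mu>0 =
            ereal ((\<Sum>j<N. (r j - (if j = k then w * r k else 0)) * ((\<rho> j)\<^sup>2 * f (t j))) + w * r k * (\<rho>e\<^sup>2 * f te) + m * f tc)
          \<and> (\<exists>P. finite P \<and> P \<subseteq> S1 \<and> card P \<le> N + 2 \<and> emeasure \<mu>0 (S1 - P) = 0)"
proof -
  define u where "u j = r j - (if j = k then w * r k else 0)" for j
  have u: "u j \<ge> 0" if "j < N" for j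
  proof -
    have "r j > 0" using weights_pos that by simp
    then show ?thesis using w by (auto simp: u_def mult_left_le_one_le)
  qed
  have wr: "w * r k \<ge> 0" using w weights_pos by (auto intro: less_imp_le)
  define p where "p i = (if i < N then complex_of_real (sqrt (u i) * \<rho> i) * t i
      else if i = N then complex_of_real (sqrt (w * r k) * \<rho>e) * te else complex_of_real (sqrt m) * tc)" for i
  define q where "q i = (if i < N then complex_of_real (sqrt (u i)) * x i
      else if i = N then complex_of_real (sqrt (w * r k)) * x k else 0)" for i
  have split: "(\<Sum>i<N + 2. g i) = (\<Sum>i<N. g i) + g N + g (Suc N)" for g :: "nat \<Rightarrow> real"
    by (simp add: numeral_2_eq_2)
  have xk: "w * r k * pc (x k) te \<rho>e = (cmod (complex_of_real (sqrt (w * r k) * \<rho>e) * te - complex_of_real (sqrt (w * r k)) * x k))\<^sup>2"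
  proof (cases "w = 0")
    case True then show ?thesis by simp
  next
    case False then have "k < N" using w by simp
    then show ?thesis using atom_cost[OF wr te(2) te(1)] atoms_on by simp
  qed
  have margR: "(\<Sum>i<N + 2. (cmod (q i))\<^sup>2 * indicator A (theta (q i))) = (\<Sum>j<N. r j * indicator A (x j))" for A
  proof -
    have "(\<Sum>i<N + 2. (cmod (q i))\<^sup>2 * indicator A (theta (q i)))
        = (\<Sum>j<N. u j * indicator A (x j)) + w * r k * indicator A (x k)"
    proof -
      have "(\<Sum>i<N. (cmod (q i))\<^sup>2 * indicator A (theta (q i))) = (\<Sum>j<N. u j * indicator A (x j))"
        using u atoms_on by (intro sum.cong refl) (simp add: q_def atom_ind)
      moreover have "(cmod (q N))\<^sup>2 * indicator A (theta (q N)) = w * r k * indicator A (x k)"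
      proof (cases "w = 0")
        case True then show ?thesis by (simp add: q_def)
      next
        case False then have "k < N" using w by simp
        then show ?thesis using atom_ind[OF real_sqrt_ge_zero[OF wr], of "x k" A] atoms_on wr by (simp add: q_def)
      qed
      moreover have "(cmod (q (Suc N)))\<^sup>2 * indicator A (theta (q (Suc N))) = 0" by (simp add: q_def)
      ultimately show ?thesis by (simp only: split)
    qed
    also have "\<dots> = (\<Sum>j<N. r j * indicator A (x j))"
    proof (cases "w = 0")
      case True then have "u j = r j" for j by (simp add: u_def)
      then show ?thesis using True by simp
    next
      case False then have kN: "k < N" using w by simp
      have "(\<Sum>j<N. u j * indicator A (x j)) = (\<Sum>j<N. r j * indicator A (x j)) - (\<Sum>j<N. (if j = k then w * r k * indicator A (x k) else 0))"
      proof -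
        have "(\<Sum>j<N. u j * indicator A (x j)) = (\<Sum>j<N. r j * indicator A (x j) - (if j = k then w * r k * indicator A (x k) else 0))"
          by (intro sum.cong refl) (simp add: u_def algebra_simps)
        then show ?thesis by (simp only: sum_subtractf)
      qed
      also have "(\<Sum>j<N. (if j = k then w * r k * indicator A (x k) else 0)) = w * r k * indicator A (x k)"
        using kN by simp
      finally show ?thesis by simp
    qed
    finally show ?thesis .
  qed
  have costeq: "(\<Sum>i<N + 2. (cmod (p i - q i))\<^sup>2) = (\<Sum>j<N. u j * pc (x j) (t j) (\<rho> j)) + w * r k * pc (x k) te \<rho>e + m"
  proof -
    have "(\<Sum>i<N. (cmod (p i - q i))\<^sup>2) = (\<Sum>j<N. u j * pc (x j) (t j) (\<rho> j))"
    proof (intro sum.cong refl)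
      fix j assume "j \<in> {..<N}"
      then have j: "j < N" by simp
      show "(cmod (p j - q j))\<^sup>2 = u j * pc (x j) (t j) (\<rho> j)"
        using atom_cost[of "u j" "\<rho> j" "t j" "x j"] u[OF j] t atoms_on j by (simp add: p_def q_def)
    qed
    moreover have "(cmod (p N - q N))\<^sup>2 = w * r k * pc (x k) te \<rho>e" using xk by (simp add: p_def q_def)
    moreover have "(cmod (p (Suc N) - q (Suc N)))\<^sup>2 = m" using tc by (simp add: p_def q_def norm_mult)
    ultimately show ?thesis by (simp only: split)
  qed
  have objeq: "(\<Sum>i<N + 2. (cmod (p i))\<^sup>2 * f (theta (p i))) = (\<Sum>j<N. u j * ((\<rho> j)\<^sup>2 * f (t j))) + w * r k * (\<rho>e\<^sup>2 * f te) + m * f tc"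
  proof -
    have "(\<Sum>i<N. (cmod (p i))\<^sup>2 * f (theta (p i))) = (\<Sum>j<N. u j * ((\<rho> j)\<^sup>2 * f (t j)))"
    proof (intro sum.cong refl)
      fix j assume "j \<in> {..<N}"
      then have j: "j < N" by simp
      show "(cmod (p j))\<^sup>2 * f (theta (p j)) = u j * ((\<rho> j)\<^sup>2 * f (t j))"
        using atom_obj[of "sqrt (u j) * \<rho> j" "t j"] u[OF j] t j by (simp add: p_def power_mult_distrib)
    qed
    moreover have "(cmod (p N))\<^sup>2 * f (theta (p N)) = w * r k * (\<rho>e\<^sup>2 * f te)"
      using atom_obj[of "sqrt (w * r k) * \<rho>e" te] wr te by (simp add: p_def power_mult_distrib)
    moreover have "(cmod (p (Suc N)))\<^sup>2 * f (theta (p (Suc N))) = m * f tc"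
      using atom_obj[of "sqrt m" tc] tc by (simp add: p_def)
    ultimately show ?thesis by (simp only: split)
  qed
  have ue: "(\<Sum>j<N. u j * pc (x j) (t j) (\<rho> j)) = (\<Sum>j<N. (r j - (if j = k then w * r k else 0)) * pc (x j) (t j) (\<rho> j))"
    by (simp add: u_def)
  have c: "(\<Sum>i<N + 2. (cmod (p i - q i))\<^sup>2) \<le> lam\<^sup>2" using cost costeq ue by linarith
  have ue2: "(\<Sum>j<N. u j * ((\<rho> j)\<^sup>2 * f (t j))) = (\<Sum>j<N. (r j - (if j = k then w * r k else 0)) * ((\<rho> j)\<^sup>2 * f (t j)))"
    by (simp add: u_def)
  note P = plan[OF margR c]
  show ?thesis using P unfolding objeq ue2 by blast
qed

end



lemma ivt_nat:
  fixes g :: "nat \<Rightarrow> real"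
  assumes "g 0 \<le> c" "c \<le> g N"
  shows "\<exists>k\<le>N. g k \<le> c \<and> (k < N \<longrightarrow> c \<le> g (Suc k)) \<and> (k = N \<longrightarrow> g k = c)"
  using assms(2)
proof (induction N)
  case 0 then show ?case using assms(1) by auto
next
  case (Suc n)
  show ?case
  proof (cases "g n \<le> c")
    case True then show ?thesis using Suc.prems by (intro exI[of _ n]) auto
  next
    case False
    then have "c \<le> g n" by simp
    from Suc.IH[OF this] obtain k where "k \<le> n" "g k \<le> c" "k < n \<longrightarrow> c \<le> g (Suc k)" "k = n \<longrightarrow> g k = c" by blast
    then show ?thesis using False by (intro exI[of _ k]) auto
  qed
qed

context setting
begin

definition Cst :: "(nat \<Rightarrow> complex) \<Rightarrow> (nat \<Rightarrow> real) \<Rightarrow> real" where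
  "Cst t \<rho> = (\<Sum>j<N. r j * pc (x j) (t j) (\<rho> j))"
definition Obj :: "(nat \<Rightarrow> complex) \<Rightarrow> (nat \<Rightarrow> real) \<Rightarrow> real" where
  "Obj t \<rho> = (\<Sum>j<N. r j * ((\<rho> j)\<^sup>2 * f (t j)))"

lemma tm_sum: "(\<Sum>j\<in>I. c j * tm f \<alpha> (y j) (t j) (\<rho> j)) = (\<Sum>j\<in>I. c j * ((\<rho> j)\<^sup>2 * f (t j))) - \<alpha> * (\<Sum>j\<in>I. c j * pc (y j) (t j) (\<rho> j))"
  by (simp add: tm_def sum_subtractf[symmetric] sum_distrib_left algebra_simps)

lemma tm_sum_r: "(\<Sum>j<N. r j * tm f \<alpha> (x j) (t j) (\<rho> j)) = Obj t \<rho> - \<alpha> * Cst t \<rho>"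
  unfolding Obj_def Cst_def by (rule tm_sum)

lemma opt_eq: "opt \<alpha> j t \<rho> \<Longrightarrow> opt \<alpha> j t' \<rho>' \<Longrightarrow> tm f \<alpha> (x j) t \<rho> = tm f \<alpha> (x j) t' \<rho>'"
  unfolding opt_def by (meson order_antisym)

lemma interp:
  assumes \<alpha>: "\<alpha> > 0"
    and om: "\<forall>j<N. opt \<alpha> j (tm' j) (\<rho>m j)" and op: "\<forall>j<N. opt \<alpha> j (tp j) (\<rho>p j)"
    and cp: "Cst tp \<rho>p \<le> lam\<^sup>2" and cm: "lam\<^sup>2 \<le> Cst tm' \<rho>m"
  shows "\<exists>\<mu>0 \<in> WFR_ball lam \<mu>1. ext_integral f \<mu>0 = ereal (\<alpha> * lam\<^sup>2 + (\<Sum>j<N. r j * tm f \<alpha> (x j) (tm' j) (\<rho>m j)))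
          \<and> (\<exists>P. finite P \<and> P \<subseteq> S1 \<and> card P \<le> N + 2 \<and> emeasure \<mu>0 (S1 - P) = 0)"
proof -
  define T where "T j = tm f \<alpha> (x j) (tm' j) (\<rho>m j)" for j
  define tH where "tH k j = (if j < k then tm' j else tp j)" for k j
  define \<rho>H where "\<rho>H k j = (if j < k then \<rho>m j else \<rho>p j)" for k j
  define g where "g k = Cst (tH k) (\<rho>H k)" for k
  have g0: "g 0 = Cst tp \<rho>p" unfolding g_def Cst_def by (simp add: tH_def \<rho>H_def)
  have gN: "g N = Cst tm' \<rho>m" unfolding g_def Cst_def by (intro sum.cong refl) (simp add: tH_def \<rho>H_def)
  obtain k where k: "k \<le> N" "g k \<le> lam\<^sup>2" "k < N \<longrightarrow> lam\<^sup>2 \<le> g (Suc k)" "k = N \<longrightarrow> g k = lam\<^sup>2"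
    using ivt_nat[of g "lam\<^sup>2" N] g0 gN cp cm by auto
  have optH: "\<forall>j<N. opt \<alpha> j (tH k j) (\<rho>H k j)" using om op by (simp add: tH_def \<rho>H_def)
  have SH: "\<forall>j<N. tH k j \<in> S1 \<and> \<rho>H k j \<ge> 0" using optH by (simp add: opt_def)
  have TH: "tm f \<alpha> (x j) (tH k j) (\<rho>H k j) = T j" if "j < N" for j
    using opt_eq optH om that by (simp add: T_def)
  define pm where "pm = (if k < N then r k * (pc (x k) (tm' k) (\<rho>m k) - pc (x k) (tp k) (\<rho>p k)) else 0)"
  have gdiff: "k < N \<Longrightarrow> g (Suc k) = g k + pm"
  proof -
    assume kN: "k < N"
    have "g (Suc k) - g k = (\<Sum>j<N. r j * pc (x j) (tH (Suc k) j) (\<rho>H (Suc k) j) - r j * pc (x j) (tH k j) (\<rho>H k j))"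
      by (simp add: g_def Cst_def sum_subtractf)
    also have "\<dots> = (\<Sum>j<N. if j = k then pm else 0)"
      using kN by (intro sum.cong refl) (auto simp: tH_def \<rho>H_def pm_def algebra_simps)
    also have "\<dots> = pm" using kN by simp
    finally show ?thesis by simp
  qed
  define w where "w = (if k < N \<and> pm \<noteq> 0 then (lam\<^sup>2 - g k) / pm else 0)"
  have w: "0 \<le> w" "w \<le> 1" "w = 0 \<or> k < N"
  proof -
    show "w = 0 \<or> k < N" by (auto simp: w_def)
    have "0 \<le> w \<and> w \<le> 1"
    proof (cases "k < N \<and> pm \<noteq> 0")
      case True
      then have "g k + pm \<ge> lam\<^sup>2" using k gdiff by simp
      then have pmpos: "pm > 0" using True k(2) by linarith
      have "0 \<le> (lam\<^sup>2 - g k) / pm" using k(2) pmpos by simp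
      moreover have "(lam\<^sup>2 - g k) / pm \<le> 1" using pmpos \<open>g k + pm \<ge> lam\<^sup>2\<close> by (simp add: divide_le_eq_1_pos)
      ultimately show ?thesis using True by (auto simp: w_def)
    qed (auto simp: w_def)
    then show "0 \<le> w" "w \<le> 1" by auto
  qed
  have costw: "g k + w * pm = lam\<^sup>2"
  proof (cases "k < N \<and> pm \<noteq> 0")
    case True then show ?thesis by (simp add: w_def)
  next
    case False
    then consider "k = N" | "k < N" "pm = 0" using k(1) by linarith
    then show ?thesis
    proof cases
      case 1 then show ?thesis using k by (simp add: w_def)
    next
      case 2 then show ?thesis using k gdiff by (simp add: w_def)
    qed
  qed
  define u where "u j = r j - (if j = k then w * r k else 0)" for j
  have cost_eq: "(\<Sum>j<N. u j * pc (x j) (tH k j) (\<rho>H k j)) + w * r k * pc (x k) (tm' k) (\<rho>m k) = g k + w * pm"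
  proof (cases "w = 0")
    case True
    have "u j = r j" for j using True by (simp add: u_def)
    then show ?thesis using True by (simp add: g_def Cst_def)
  next
    case False then have kN: "k < N" using w by simp
    have "(\<Sum>j<N. u j * pc (x j) (tH k j) (\<rho>H k j)) = (\<Sum>j<N. r j * pc (x j) (tH k j) (\<rho>H k j) - (if j = k then w * r k * pc (x k) (tp k) (\<rho>p k) else 0))"
      by (intro sum.cong refl) (auto simp: u_def tH_def \<rho>H_def algebra_simps)
    also have "\<dots> = g k - w * r k * pc (x k) (tp k) (\<rho>p k)" using kN by (simp add: sum_subtractf g_def Cst_def)
    finally show ?thesis using kN by (simp add: pm_def algebra_simps)
  qed
  have tmS: "tm' k \<in> S1" "\<rho>m k \<ge> 0" if "k < N" using om that by (auto simp: opt_def)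
  have te: "tm' k \<in> S1 \<and> \<rho>m k \<ge> 0 \<or> w = 0" using tmS w by auto
  \<comment> \<open>choose extra atom data; if w = 0 it is irrelevant\<close>
  define te where "te = (if k < N then tm' k else 1)"
  define \<rho>e where "\<rho>e = (if k < N then \<rho>m k else 0)"
  have teS: "te \<in> S1" "\<rho>e \<ge> 0" using tmS by (auto simp: te_def \<rho>e_def)
  have wk: "w * r k * pc (x k) te \<rho>e = w * r k * pc (x k) (tm' k) (\<rho>m k)"
    using w by (auto simp: te_def \<rho>e_def)
  have wk2: "w * r k * (\<rho>e\<^sup>2 * f te) = w * r k * ((\<rho>m k)\<^sup>2 * f (tm' k))"
    using w by (auto simp: te_def \<rho>e_def)
  have cost: "(\<Sum>j<N. (r j - (if j = k then w * r k else 0)) * pc (x j) (tH k j) (\<rho>H k j)) + w * r k * pc (x k) te \<rho>e + 0 \<le> lam\<^sup>2"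
    unfolding wk using cost_eq costw by (simp add: u_def)
  obtain tM where tM: "tM \<in> S1" using atoms_on by (metis norm_one mem_sphere_0)
  from plan_cfg[OF SH w teS tM order_refl cost] obtain \<mu>0 where
    \<mu>0: "\<mu>0 \<in> WFR_ball lam \<mu>1"
    "ext_integral f \<mu>0 = ereal ((\<Sum>j<N. (r j - (if j = k then w * r k else 0)) * ((\<rho>H k j)\<^sup>2 * f (tH k j))) + w * r k * (\<rho>e\<^sup>2 * f te) + 0 * f tM)"
    "\<exists>P. finite P \<and> P \<subseteq> S1 \<and> card P \<le> N + 2 \<and> emeasure \<mu>0 (S1 - P) = 0"
    by blast
  define V where "V = (\<Sum>j<N. u j * ((\<rho>H k j)\<^sup>2 * f (tH k j))) + w * r k * ((\<rho>m k)\<^sup>2 * f (tm' k))"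
  have "V - \<alpha> * lam\<^sup>2 = (\<Sum>j<N. u j * tm f \<alpha> (x j) (tH k j) (\<rho>H k j)) + w * r k * tm f \<alpha> (x k) (tm' k) (\<rho>m k)"
  proof -
    have cl: "\<alpha> * ((\<Sum>j<N. u j * pc (x j) (tH k j) (\<rho>H k j)) + w * r k * pc (x k) (tm' k) (\<rho>m k)) = \<alpha> * lam\<^sup>2"
      using cost_eq costw by simp
    show ?thesis using cl unfolding V_def tm_sum by (simp add: tm_def algebra_simps)
  qed
  also have "\<dots> = (\<Sum>j<N. u j * T j) + w * r k * T k"
    using TH by (simp add: T_def)
  also have "\<dots> = (\<Sum>j<N. r j * T j)"
  proof (cases "w = 0")
    case True
    have "u j = r j" for j using True by (simp add: u_def)
    then show ?thesis using True by simp
  next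
    case False then have kN: "k < N" using w by simp
    have "(\<Sum>j<N. u j * T j) = (\<Sum>j<N. r j * T j - (if j = k then w * r k * T k else 0))"
      by (intro sum.cong refl) (auto simp: u_def algebra_simps)
    also have "\<dots> = (\<Sum>j<N. r j * T j) - w * r k * T k" using kN by (simp add: sum_subtractf)
    finally show ?thesis by simp
  qed
  finally have "V = \<alpha> * lam\<^sup>2 + (\<Sum>j<N. r j * T j)" by simp
  moreover have "ext_integral f \<mu>0 = ereal V" using \<mu>0(2) unfolding wk2 V_def u_def by simp
  ultimately show ?thesis using \<mu>0 by (auto simp: T_def)
qed

end



context setting
begin

lemma cfg_limit:
  fixes tn :: "nat \<Rightarrow> nat \<Rightarrow> complex" and \<rho>n :: "nat \<Rightarrow> nat \<Rightarrow> real"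
  assumes b: "\<And>n j. j < N \<Longrightarrow> tn n j \<in> S1 \<and> 0 \<le> \<rho>n n j \<and> \<rho>n n j \<le> B"
  shows "\<exists>rr t \<rho>. strict_mono rr \<and> (\<forall>j<N. t j \<in> S1 \<and> 0 \<le> \<rho> j \<and>
            (\<lambda>n. tn (rr n) j) \<longlonglongrightarrow> t j \<and> (\<lambda>n. \<rho>n (rr n) j) \<longlonglongrightarrow> \<rho> j)"
proof -
  have K: "compact (S1 \<times> {0..B})" by (intro compact_Times compact_sphere compact_Icc)
  have "\<And>n j. j < N \<Longrightarrow> (\<lambda>n j. (tn n j, \<rho>n n j)) n j \<in> S1 \<times> {0..B}" using b by auto
  from common_subseq[where s="\<lambda>n j. (tn n j, \<rho>n n j)", OF K this] obtain rr l where rr: "strict_mono rr"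
    and l: "\<forall>j<N. l j \<in> S1 \<times> {0..B} \<and> (\<lambda>n. (tn (rr n) j, \<rho>n (rr n) j)) \<longlonglongrightarrow> l j" by blast
  define t where "t j = fst (l j)" for j
  define \<rho> where "\<rho> j = snd (l j)" for j
  have "\<forall>j<N. t j \<in> S1 \<and> 0 \<le> \<rho> j \<and> (\<lambda>n. tn (rr n) j) \<longlonglongrightarrow> t j \<and> (\<lambda>n. \<rho>n (rr n) j) \<longlonglongrightarrow> \<rho> j"
  proof (intro allI impI)
    fix j assume j: "j < N"
    have c: "(\<lambda>n. (tn (rr n) j, \<rho>n (rr n) j)) \<longlonglongrightarrow> l j" and m: "l j \<in> S1 \<times> {0..B}" using l j by auto
    show "t j \<in> S1 \<and> 0 \<le> \<rho> j \<and> (\<lambda>n. tn (rr n) j) \<longlonglongrightarrow> t j \<and> (\<lambda>n. \<rho>n (rr n) j) \<longlonglongrightarrow> \<rho> j"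
      using m tendsto_fst[OF c] tendsto_snd[OF c] by (auto simp: t_def \<rho>_def mem_Times_iff)
  qed
  then show ?thesis using rr by blast
qed

lemma Cst_cont:
  assumes "\<forall>j<N. (\<lambda>n. tn n j) \<longlonglongrightarrow> t j \<and> (\<lambda>n. \<rho>n n j) \<longlonglongrightarrow> \<rho> j"
  shows "(\<lambda>n. Cst (tn n) (\<rho>n n)) \<longlonglongrightarrow> Cst t \<rho>"
  unfolding Cst_def pc_def cc_def using assms by (intro tendsto_sum tendsto_intros) auto

lemma Obj_usc:
  assumes "\<forall>j<N. (\<lambda>n. tn n j) \<longlonglongrightarrow> t j \<and> (\<lambda>n. \<rho>n n j) \<longlonglongrightarrow> \<rho> j \<and> t j \<in> S1 \<and> (\<forall>n. tn n j \<in> S1)"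
    and e: "e > 0"
  shows "eventually (\<lambda>n. Obj (tn n) (\<rho>n n) < Obj t \<rho> + e) sequentially"
proof -
  define e' where "e' = e / (real N + 1)"
  have e': "e' > 0" using e by (simp add: e'_def add_pos_nonneg)
  have "eventually (\<lambda>n. \<forall>j\<in>{..<N}. r j * ((\<rho>n n j)\<^sup>2 * f (tn n j)) < r j * ((\<rho> j)\<^sup>2 * f (t j)) + e') sequentially"
  proof (rule eventually_ball_finite, simp, intro ballI)
    fix j assume "j \<in> {..<N}"
    then have j: "j < N" by simp
    have rj: "r j > 0" using weights_pos j by simp
    have "eventually (\<lambda>n. (\<rho>n n j)\<^sup>2 * f (tn n j) < (\<rho> j)\<^sup>2 * f (t j) + e' / r j) sequentially"
      by (rule usc_sq[OF usc_seq]) (use assms(1) j e' rj in auto)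
    then show "eventually (\<lambda>n. r j * ((\<rho>n n j)\<^sup>2 * f (tn n j)) < r j * ((\<rho> j)\<^sup>2 * f (t j)) + e') sequentially"
    proof eventually_elim
      case (elim n)
      have "r j * ((\<rho>n n j)\<^sup>2 * f (tn n j)) < r j * ((\<rho> j)\<^sup>2 * f (t j) + e' / r j)"
        using elim rj by (rule mult_strict_left_mono)
      then show ?case using rj by (simp add: algebra_simps)
    qed
  qed
  then show ?thesis
  proof eventually_elim
    case (elim n)
    have "Obj (tn n) (\<rho>n n) \<le> (\<Sum>j<N. r j * ((\<rho> j)\<^sup>2 * f (t j)) + e')"
      unfolding Obj_def using elim by (intro sum_mono) (simp add: less_imp_le)
    also have "\<dots> = Obj t \<rho> + real N * e'" by (simp add: Obj_def sum.distrib)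
    also have "real N * e' < e" using e by (simp add: e'_def field_simps)
    finally show ?case by simp
  qed
qed

lemma optc_exists:
  assumes "\<alpha> > 0" "\<alpha> > M" "\<forall>y\<in>S1. f y \<le> M"
  shows "\<exists>t \<rho>. \<forall>j<N. opt \<alpha> j (t j) (\<rho> j)"
proof -
  have "\<forall>j. \<exists>p. j < N \<longrightarrow> opt \<alpha> j (fst p) (snd p)" using opt_exists[OF assms] by auto
  then obtain F where "\<forall>j. j < N \<longrightarrow> opt \<alpha> j (fst (F j)) (snd (F j))" by metis
  then show ?thesis by (intro exI[of _ "\<lambda>j. fst (F j)"] exI[of _ "\<lambda>j. snd (F j)"]) auto
qed

end



context setting
begin

definition Sset :: "real \<Rightarrow> real set" where
  "Sset a0 = {\<alpha>. \<alpha> > a0 \<and> (\<exists>t \<rho>. (\<forall>j<N. opt \<alpha> j (t j) (\<rho> j)) \<and> lam\<^sup>2 \<le> Cst t \<rho>)}"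

definition goal :: bool where
  "goal \<longleftrightarrow> (\<exists>\<mu>0\<in>WFR_ball lam \<mu>1. (\<forall>\<nu>\<in>WFR_ball lam \<mu>1. ext_integral f \<nu> \<le> ext_integral f \<mu>0)
         \<and> (\<exists>P. finite P \<and> P \<subseteq> S1 \<and> card P \<le> N + 2 \<and> emeasure \<mu>0 (S1 - P) = 0))"

lemma finish:
  assumes "\<mu>0 \<in> WFR_ball lam \<mu>1" "ext_integral f \<mu>0 = ereal V"
    "\<exists>P. finite P \<and> P \<subseteq> S1 \<and> card P \<le> N + 2 \<and> emeasure \<mu>0 (S1 - P) = 0"
    "\<forall>\<nu>\<in>WFR_ball lam \<mu>1. ext_integral f \<nu> \<le> ereal V"
  shows goal
  unfolding goal_def
proof (rule bexI[of _ \<mu>0])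
  show "\<mu>0 \<in> WFR_ball lam \<mu>1" by (rule assms(1))
  show "(\<forall>\<nu>\<in>WFR_ball lam \<mu>1. ext_integral f \<nu> \<le> ext_integral f \<mu>0) \<and>
    (\<exists>P. finite P \<and> P \<subseteq> S1 \<and> card P \<le> N + 2 \<and> emeasure \<mu>0 (S1 - P) = 0)"
    using assms(2-4) by simp
qed

lemma upper:
  assumes "\<alpha> > a0" "a0 \<ge> 0" "\<forall>y\<in>S1. f y \<le> a0" "\<forall>j<N. opt \<alpha> j (t j) (\<rho> j)" "\<nu> \<in> WFR_ball lam \<mu>1"
  shows "ext_integral f \<nu> \<le> ereal (Obj t \<rho> + \<alpha> * (lam\<^sup>2 - Cst t \<rho>))"
proof -
  have "ext_integral f \<nu> \<le> ereal (\<alpha> * lam\<^sup>2 + (\<Sum>j<N. r j * tm f \<alpha> (x j) (t j) (\<rho> j)))"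
    by (rule weak_opt[where M=a0]) (use assms in auto)
  then show ?thesis by (simp add: tm_sum_r algebra_simps)
qed

lemma eps_upper:
  assumes "\<And>e. e > 0 \<Longrightarrow> \<exists>n. X \<le> ereal (u n) \<and> u n < V + e"
  shows "X \<le> ereal V"
proof (rule ereal_le_epsilon2)
  fix e :: real assume "e > 0"
  then obtain n where "X \<le> ereal (u n)" "u n < V + e" using assms by blast
  then show "X \<le> ereal V + ereal e" by (metis ereal_less_eq(3) less_imp_le order_trans plus_ereal.simps(1))
qed

lemma caseA:
  assumes a0: "a0 \<ge> 0" and fM: "\<forall>y\<in>S1. f y \<le> a0" and tM: "tM \<in> S1"
    and nb: "\<not> bdd_above (Sset a0)"
  shows goal
proof -
  have "\<forall>n::nat. \<exists>\<alpha> t \<rho>. \<alpha> \<ge> real n + 2 * a0 + 1 \<and> \<alpha> > a0 \<and> (\<forall>j<N. opt \<alpha> j (t j) (\<rho> j)) \<and> lam\<^sup>2 \<le> Cst t \<rho>"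
  proof
    fix n :: nat
    obtain \<alpha> where "\<alpha> \<in> Sset a0" "\<alpha> > real n + 2 * a0 + 1"
      using nb unfolding bdd_above_def by (metis not_le)
    then obtain t \<rho> where "\<alpha> > a0" "\<forall>j<N. opt \<alpha> j (t j) (\<rho> j)" "lam\<^sup>2 \<le> Cst t \<rho>" "\<alpha> > real n + 2 * a0 + 1"
      unfolding Sset_def by auto
    then show "\<exists>\<alpha> t \<rho>. \<alpha> \<ge> real n + 2 * a0 + 1 \<and> \<alpha> > a0 \<and> (\<forall>j<N. opt \<alpha> j (t j) (\<rho> j)) \<and> lam\<^sup>2 \<le> Cst t \<rho>"
      by (intro exI[of _ \<alpha>] exI[of _ t] exI[of _ \<rho>]) auto
  qed
  then obtain \<alpha>s tn \<rho>n where sq: "\<And>n. \<alpha>s n \<ge> real n + 2 * a0 + 1" "\<And>n. \<alpha>s n > a0"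
    "\<And>n. \<forall>j<N. opt (\<alpha>s n) j (tn n j) (\<rho>n n j)" "\<And>n. lam\<^sup>2 \<le> Cst (tn n) (\<rho>n n)"
    by metis
  have bnd: "tn n j \<in> S1 \<and> 0 \<le> \<rho>n n j \<and> \<rho>n n j \<le> 4" if j: "j < N" for n j
  proof -
    have o: "opt (\<alpha>s n) j (tn n j) (\<rho>n n j)" using sq(3) j by blast
    have ap: "\<alpha>s n > 0" "\<alpha>s n > a0" using sq(1)[of n] a0 by auto
    have "\<rho>n n j \<le> 2 * \<alpha>s n / (\<alpha>s n - a0)" by (rule opt_rho_bound[OF ap fM j o])
    also have "\<dots> \<le> 4" using ap sq(1)[of n] a0 by (simp add: divide_le_eq)
    finally show ?thesis using o by (simp add: opt_def)
  qed
  define Q where "Q = (\<Sum>j<N. r j * \<bar>2 * a0 - f (x j)\<bar>)"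
  have Cb: "Cst (tn n) (\<rho>n n) \<le> Q / (real n + 1)" for n
  proof -
    have d: "\<alpha>s n - 2 * a0 \<ge> real n + 1" using sq(1)[of n] by simp
    have "Cst (tn n) (\<rho>n n) * (\<alpha>s n - 2 * a0) = (\<Sum>j<N. r j * ((\<alpha>s n - 2 * a0) * pc (x j) (tn n j) (\<rho>n n j)))"
      unfolding Cst_def sum_distrib_right by (intro sum.cong refl) (simp add: algebra_simps)
    also have "\<dots> \<le> Q" unfolding Q_def
    proof (intro sum_mono)
      fix j assume "j \<in> {..<N}"
      then have j: "j < N" by simp
      have "(\<alpha>s n - 2 * a0) * pc (x j) (tn n j) (\<rho>n n j) \<le> 2 * a0 - f (x j)"
        by (rule opt_pc_bound[OF a0 fM j]) (use sq(3) j in blast)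
      also have "\<dots> \<le> \<bar>2 * a0 - f (x j)\<bar>" by simp
      finally show "r j * ((\<alpha>s n - 2 * a0) * pc (x j) (tn n j) (\<rho>n n j)) \<le> r j * \<bar>2 * a0 - f (x j)\<bar>"
        using weights_pos j by (intro mult_left_mono) auto
    qed
    finally have "Cst (tn n) (\<rho>n n) * (\<alpha>s n - 2 * a0) \<le> Q" .
    moreover have "Q \<ge> 0" unfolding Q_def using weights_pos by (intro sum_nonneg) (simp add: less_imp_le)
    moreover have "Cst (tn n) (\<rho>n n) \<ge> 0" using sq(4)[of n] by (smt (verit) zero_le_power2)
    ultimately have "Cst (tn n) (\<rho>n n) * (real n + 1) \<le> Q"
      using d by (smt (verit) mult_left_mono)
    then show ?thesis by (simp add: field_simps add_pos_nonneg)
  qed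
  obtain rr t \<rho> where rr: "strict_mono rr" and lim: "\<forall>j<N. t j \<in> S1 \<and> 0 \<le> \<rho> j \<and>
      (\<lambda>n. tn (rr n) j) \<longlonglongrightarrow> t j \<and> (\<lambda>n. \<rho>n (rr n) j) \<longlonglongrightarrow> \<rho> j"
    using cfg_limit[of tn \<rho>n 4] bnd by blast
  have Ct: "(\<lambda>n. Cst (tn (rr n)) (\<rho>n (rr n))) \<longlonglongrightarrow> Cst t \<rho>" using lim by (intro Cst_cont) auto
  have "(\<lambda>n. Q / (real (rr n) + 1)) \<longlonglongrightarrow> 0"
  proof -
    have "(\<lambda>n. Q / (real n + 1)) \<longlonglongrightarrow> 0" by real_asymp
    then show ?thesis using LIMSEQ_subseq_LIMSEQ[OF _ rr] by (simp add: o_def)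
  qed
  then have C0: "Cst t \<rho> \<le> 0" using Ct Cb by (intro LIMSEQ_le[OF Ct]) auto
  have cost: "(\<Sum>j<N. (r j - (if j = 0 then 0 * r 0 else 0)) * pc (x j) (t j) (\<rho> j)) + 0 * r 0 * pc (x 0) tM 0 + 0 \<le> lam\<^sup>2"
  proof -
    have "(\<Sum>j<N. (r j - (if j = 0 then 0 * r 0 else 0)) * pc (x j) (t j) (\<rho> j)) = Cst t \<rho>"
      unfolding Cst_def by (intro sum.cong refl) simp
    then show ?thesis using C0 zero_le_power2[of lam] by (simp only: mult_zero_left add_0_right)
  qed
  have oeq: "(\<Sum>j<N. (r j - (if j = 0 then 0 * r 0 else 0)) * ((\<rho> j)\<^sup>2 * f (t j))) = Obj t \<rho>"
    unfolding Obj_def by (intro sum.cong refl) simp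
  have "\<forall>j<N. t j \<in> S1 \<and> \<rho> j \<ge> 0" using lim by auto
  from plan_cfg[OF this, of 0 0 tM 0 tM 0] tM cost obtain \<mu>0 where
    \<mu>0: "\<mu>0 \<in> WFR_ball lam \<mu>1" "ext_integral f \<mu>0 = ereal (Obj t \<rho>)"
    "\<exists>P. finite P \<and> P \<subseteq> S1 \<and> card P \<le> N + 2 \<and> emeasure \<mu>0 (S1 - P) = 0"
    unfolding oeq by auto
  have "\<forall>\<nu>\<in>WFR_ball lam \<mu>1. ext_integral f \<nu> \<le> ereal (Obj t \<rho>)"
  proof
    fix \<nu> assume \<nu>: "\<nu> \<in> WFR_ball lam \<mu>1"
    have up: "ext_integral f \<nu> \<le> ereal (Obj (tn n) (\<rho>n n))" for n
    proof -
      have "ext_integral f \<nu> \<le> ereal (Obj (tn n) (\<rho>n n) + \<alpha>s n * (lam\<^sup>2 - Cst (tn n) (\<rho>n n)))"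
        by (rule upper[OF sq(2) a0 fM sq(3) \<nu>])
      moreover have "\<alpha>s n * (lam\<^sup>2 - Cst (tn n) (\<rho>n n)) \<le> 0"
        using sq(2)[of n] sq(4)[of n] a0 by (intro mult_nonneg_nonpos) auto
      then have "ereal (Obj (tn n) (\<rho>n n) + \<alpha>s n * (lam\<^sup>2 - Cst (tn n) (\<rho>n n))) \<le> ereal (Obj (tn n) (\<rho>n n))"
        by simp
      ultimately show ?thesis by (rule order_trans)
    qed
    show "ext_integral f \<nu> \<le> ereal (Obj t \<rho>)"
    proof (rule eps_upper)
      fix e :: real assume e: "e > 0"
      have "eventually (\<lambda>n. Obj (tn (rr n)) (\<rho>n (rr n)) < Obj t \<rho> + e) sequentially"
        by (rule Obj_usc[OF _ e]) (use lim bnd in auto)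
      then obtain N0 where "\<forall>n\<ge>N0. Obj (tn (rr n)) (\<rho>n (rr n)) < Obj t \<rho> + e"
        unfolding eventually_sequentially by blast
      then have "Obj (tn (rr N0)) (\<rho>n (rr N0)) < Obj t \<rho> + e" by simp
      then show "\<exists>n. ext_integral f \<nu> \<le> ereal (Obj (tn (rr n)) (\<rho>n (rr n))) \<and> Obj (tn (rr n)) (\<rho>n (rr n)) < Obj t \<rho> + e"
        using up[of "rr N0"] by blast
    qed
  qed
  then show goal using \<mu>0 by (intro finish) auto
qed

end



context setting
begin

lemma rho_le_pc: assumes "y \<in> S1" "t \<in> S1" "\<rho> \<ge> 0" shows "\<rho> \<le> 2 * pc y t \<rho> + 3"
proof -
  have "\<rho> \<le> \<rho>\<^sup>2 + 1"
  proof -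
    have "0 \<le> (\<rho> - 1)\<^sup>2" by simp
    then show ?thesis unfolding power2_eq_square by (simp add: algebra_simps) (smt (verit) mult_nonneg_nonneg assms(3))
  qed
  then show ?thesis using rho_sq_le[OF assms] by linarith
qed

lemma caseC:
  assumes a0: "a0 \<ge> 0" and fM: "\<forall>y\<in>S1. f y \<le> a0" and tM: "tM \<in> S1"
    and hM1: "f tM > 0 \<longrightarrow> a0 = f tM" and hM2: "f tM \<le> 0 \<longrightarrow> a0 = 0"
    and Se: "Sset a0 = {}"
  shows goal
proof -
  define \<alpha>n where "\<alpha>n n = a0 + 1 / (real n + 1)" for n
  have \<alpha>n1: "\<alpha>n n > a0" for n
  proof -
    have "1 / (real n + 1) > 0" by simp
    then show ?thesis by (simp add: \<alpha>n_def)
  qed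
  have \<alpha>n: "\<alpha>n n > a0" "\<alpha>n n > 0" for n using \<alpha>n1[of n] a0 by auto
  have "\<forall>n. \<exists>t \<rho>. \<forall>j<N. opt (\<alpha>n n) j (t j) (\<rho> j)"
    using optc_exists[OF \<alpha>n(2) \<alpha>n(1) fM] by blast
  then obtain tn \<rho>n where o: "\<And>n. \<forall>j<N. opt (\<alpha>n n) j (tn n j) (\<rho>n n j)" by metis
  have Cl: "Cst (tn n) (\<rho>n n) < lam\<^sup>2" for n
  proof (rule ccontr)
    assume "\<not> ?thesis"
    then have "lam\<^sup>2 \<le> Cst (tn n) (\<rho>n n)" by simp
    then have "\<alpha>n n \<in> Sset a0" using o[of n] \<alpha>n[of n] unfolding Sset_def by blast
    then show False using Se by simp
  qed
  define B where "B = 2 * (\<Sum>i<N. lam\<^sup>2 / r i) + 3"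
  have bnd: "tn n j \<in> S1 \<and> 0 \<le> \<rho>n n j \<and> \<rho>n n j \<le> B" if j: "j < N" for n j
  proof -
    have oj: "opt (\<alpha>n n) j (tn n j) (\<rho>n n j)" using o j by blast
    then have tS: "tn n j \<in> S1" and rp: "\<rho>n n j \<ge> 0" by (auto simp: opt_def)
    have xj: "x j \<in> S1" using atoms_on j by simp
    have rj: "r j > 0" using weights_pos j by simp
    have nn: "\<forall>i\<in>{..<N}. 0 \<le> r i * pc (x i) (tn n i) (\<rho>n n i)"
    proof
      fix i assume "i \<in> {..<N}"
      then have i: "i < N" by simp
      have "opt (\<alpha>n n) i (tn n i) (\<rho>n n i)" using o i by blast
      then have a: "tn n i \<in> S1" "\<rho>n n i \<ge> 0" by (auto simp: opt_def)
      have b: "x i \<in> S1" "r i > 0" using atoms_on weights_pos i by auto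
      have "pc (x i) (tn n i) (\<rho>n n i) \<ge> 0" by (rule pc_nonneg[OF b(1) a])
      then show "0 \<le> r i * pc (x i) (tn n i) (\<rho>n n i)" using b(2) by simp
    qed
    have "r j * pc (x j) (tn n j) (\<rho>n n j) \<le> Cst (tn n) (\<rho>n n)"
      unfolding Cst_def using j nn by (intro member_le_sum) auto
    then have "r j * pc (x j) (tn n j) (\<rho>n n j) \<le> lam\<^sup>2" using Cl[of n] by linarith
    then have "pc (x j) (tn n j) (\<rho>n n j) \<le> lam\<^sup>2 / r j" using rj by (simp add: field_simps mult.commute)
    also have "\<dots> \<le> (\<Sum>i<N. lam\<^sup>2 / r i)"
      using j weights_pos by (intro member_le_sum) (auto intro: divide_nonneg_pos)
    finally have "\<rho>n n j \<le> B" using rho_le_pc[OF xj tS rp] by (simp add: B_def)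
    then show ?thesis using tS rp by simp
  qed
  obtain rr t \<rho> where rr: "strict_mono rr" and lim: "\<forall>j<N. t j \<in> S1 \<and> 0 \<le> \<rho> j \<and>
      (\<lambda>n. tn (rr n) j) \<longlonglongrightarrow> t j \<and> (\<lambda>n. \<rho>n (rr n) j) \<longlonglongrightarrow> \<rho> j"
    using cfg_limit[of tn \<rho>n B] bnd by blast
  have Ct: "(\<lambda>n. Cst (tn (rr n)) (\<rho>n (rr n))) \<longlonglongrightarrow> Cst t \<rho>" using lim by (intro Cst_cont) auto
  have CL: "Cst t \<rho> \<le> lam\<^sup>2" using Ct Cl by (intro LIMSEQ_le_const2[OF Ct]) (auto intro: less_imp_le)
  define m where "m = (if f tM > 0 then lam\<^sup>2 - Cst t \<rho> else 0)"
  have m: "m \<ge> 0" using CL by (simp add: m_def)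
  have mf: "m * f tM = a0 * (lam\<^sup>2 - Cst t \<rho>)" using hM1 hM2 by (auto simp: m_def)
  have ceq: "(\<Sum>j<N. (r j - (if j = 0 then 0 * r 0 else 0)) * pc (x j) (t j) (\<rho> j)) = Cst t \<rho>"
    unfolding Cst_def by (intro sum.cong refl) simp
  have cost: "(\<Sum>j<N. (r j - (if j = 0 then 0 * r 0 else 0)) * pc (x j) (t j) (\<rho> j)) + 0 * r 0 * pc (x 0) tM 0 + m \<le> lam\<^sup>2"
    unfolding ceq using CL m by (simp add: m_def)
  have oeq: "(\<Sum>j<N. (r j - (if j = 0 then 0 * r 0 else 0)) * ((\<rho> j)\<^sup>2 * f (t j))) = Obj t \<rho>"
    unfolding Obj_def by (intro sum.cong refl) simp
  have "\<forall>j<N. t j \<in> S1 \<and> \<rho> j \<ge> 0" using lim by auto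
  from plan_cfg[OF this, of 0 0 tM 0 tM m] tM m cost obtain \<mu>0 where
    \<mu>0: "\<mu>0 \<in> WFR_ball lam \<mu>1" "ext_integral f \<mu>0 = ereal (Obj t \<rho> + a0 * (lam\<^sup>2 - Cst t \<rho>))"
    "\<exists>P. finite P \<and> P \<subseteq> S1 \<and> card P \<le> N + 2 \<and> emeasure \<mu>0 (S1 - P) = 0"
    unfolding oeq mf by auto
  have "\<forall>\<nu>\<in>WFR_ball lam \<mu>1. ext_integral f \<nu> \<le> ereal (Obj t \<rho> + a0 * (lam\<^sup>2 - Cst t \<rho>))"
  proof
    fix \<nu> assume \<nu>: "\<nu> \<in> WFR_ball lam \<mu>1"
    have up: "ext_integral f \<nu> \<le> ereal (Obj (tn n) (\<rho>n n) + \<alpha>n n * (lam\<^sup>2 - Cst (tn n) (\<rho>n n)))" for n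
      by (rule upper[OF \<alpha>n(1) a0 fM o \<nu>])
    show "ext_integral f \<nu> \<le> ereal (Obj t \<rho> + a0 * (lam\<^sup>2 - Cst t \<rho>))"
    proof (rule eps_upper)
      fix e :: real assume e: "e > 0"
      have ev1: "eventually (\<lambda>n. Obj (tn (rr n)) (\<rho>n (rr n)) < Obj t \<rho> + e / 2) sequentially"
        by (rule Obj_usc) (use lim bnd e in auto)
      have "(\<lambda>n. \<alpha>n n) \<longlonglongrightarrow> a0" unfolding \<alpha>n_def by real_asymp
      then have "(\<lambda>n. \<alpha>n (rr n)) \<longlonglongrightarrow> a0" using LIMSEQ_subseq_LIMSEQ[OF _ rr] by (simp add: o_def)
      then have "(\<lambda>n. \<alpha>n (rr n) * (lam\<^sup>2 - Cst (tn (rr n)) (\<rho>n (rr n)))) \<longlonglongrightarrow> a0 * (lam\<^sup>2 - Cst t \<rho>)"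
        using Ct by (intro tendsto_intros)
      moreover have "a0 * (lam\<^sup>2 - Cst t \<rho>) < a0 * (lam\<^sup>2 - Cst t \<rho>) + e / 2" using e by simp
      ultimately have ev2: "eventually (\<lambda>n. \<alpha>n (rr n) * (lam\<^sup>2 - Cst (tn (rr n)) (\<rho>n (rr n))) < a0 * (lam\<^sup>2 - Cst t \<rho>) + e / 2) sequentially"
        by (rule order_tendstoD)
      from eventually_conj[OF ev1 ev2] obtain N0 where
        "\<forall>n\<ge>N0. Obj (tn (rr n)) (\<rho>n (rr n)) < Obj t \<rho> + e / 2 \<and>
          \<alpha>n (rr n) * (lam\<^sup>2 - Cst (tn (rr n)) (\<rho>n (rr n))) < a0 * (lam\<^sup>2 - Cst t \<rho>) + e / 2"
        unfolding eventually_sequentially by blast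
      then have "Obj (tn (rr N0)) (\<rho>n (rr N0)) + \<alpha>n (rr N0) * (lam\<^sup>2 - Cst (tn (rr N0)) (\<rho>n (rr N0)))
          < Obj t \<rho> + a0 * (lam\<^sup>2 - Cst t \<rho>) + e" by auto
      then show "\<exists>n. ext_integral f \<nu> \<le> ereal (Obj (tn (rr n)) (\<rho>n (rr n)) + \<alpha>n (rr n) * (lam\<^sup>2 - Cst (tn (rr n)) (\<rho>n (rr n))))
             \<and> Obj (tn (rr n)) (\<rho>n (rr n)) + \<alpha>n (rr n) * (lam\<^sup>2 - Cst (tn (rr n)) (\<rho>n (rr n))) < Obj t \<rho> + a0 * (lam\<^sup>2 - Cst t \<rho>) + e"
        using up[of "rr N0"] by blast
    qed
  qed
  then show goal using \<mu>0 by (intro finish) auto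
qed

end



context setting
begin

lemma caseB:
  assumes a0: "a0 \<ge> 0" and fM: "\<forall>y\<in>S1. f y \<le> a0"
    and Sne: "Sset a0 \<noteq> {}" and bdd: "bdd_above (Sset a0)"
  shows goal
proof -
  define as where "as = Sup (Sset a0)"
  have as_gt: "as > a0"
  proof -
    obtain \<alpha>1 where "\<alpha>1 \<in> Sset a0" using Sne by blast
    moreover then have "\<alpha>1 \<le> as" unfolding as_def using bdd by (rule cSup_upper)
    ultimately show ?thesis by (auto simp: Sset_def)
  qed
  have as0: "as > 0" using as_gt a0 by simp
  have "\<forall>n::nat. \<exists>\<alpha> t \<rho>. \<alpha> > max (as - 1 / (real n + 1)) ((as + a0) / 2) \<and> \<alpha> \<le> as \<and> \<alpha> > a0
          \<and> (\<forall>j<N. opt \<alpha> j (t j) (\<rho> j)) \<and> lam\<^sup>2 \<le> Cst t \<rho>"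
  proof
    fix n :: nat
    have "max (as - 1 / (real n + 1)) ((as + a0) / 2) < as"
      using as_gt by (simp add: add_pos_nonneg)
    then obtain \<alpha> where \<alpha>: "\<alpha> \<in> Sset a0" "max (as - 1 / (real n + 1)) ((as + a0) / 2) < \<alpha>"
      unfolding as_def using Sne bdd by (subst (asm) less_cSup_iff) auto
    have "\<alpha> \<le> as" unfolding as_def using bdd \<alpha>(1) by (rule cSup_upper[rotated])
    moreover obtain t \<rho> where "\<alpha> > a0" "\<forall>j<N. opt \<alpha> j (t j) (\<rho> j)" "lam\<^sup>2 \<le> Cst t \<rho>"
      using \<alpha>(1) unfolding Sset_def by auto
    ultimately show "\<exists>\<alpha> t \<rho>. \<alpha> > max (as - 1 / (real n + 1)) ((as + a0) / 2) \<and> \<alpha> \<le> as \<and> \<alpha> > a0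
          \<and> (\<forall>j<N. opt \<alpha> j (t j) (\<rho> j)) \<and> lam\<^sup>2 \<le> Cst t \<rho>"
      using \<alpha>(2) by (intro exI[of _ \<alpha>] exI[of _ t] exI[of _ \<rho>]) auto
  qed
  then obtain \<alpha>l tl \<rho>l where L: "\<And>n. \<alpha>l n > max (as - 1 / (real n + 1)) ((as + a0) / 2)"
    "\<And>n. \<alpha>l n \<le> as" "\<And>n. \<alpha>l n > a0" "\<And>n. \<forall>j<N. opt (\<alpha>l n) j (tl n j) (\<rho>l n j)"
    "\<And>n. lam\<^sup>2 \<le> Cst (tl n) (\<rho>l n)"
    by metis
  define B1 where "B1 = 2 * as / ((as - a0) / 2)"
  have bndL: "tl n j \<in> S1 \<and> 0 \<le> \<rho>l n j \<and> \<rho>l n j \<le> B1" if j: "j < N" for n j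
  proof -
    have o: "opt (\<alpha>l n) j (tl n j) (\<rho>l n j)" using L(4) j by blast
    have ap: "\<alpha>l n > 0" "\<alpha>l n > a0" using L(3)[of n] a0 by auto
    have "\<rho>l n j \<le> 2 * \<alpha>l n / (\<alpha>l n - a0)" by (rule opt_rho_bound[OF ap fM j o])
    also have "\<dots> \<le> B1" unfolding B1_def
    proof (rule frac_le)
      show "0 \<le> 2 * as" using as0 by simp
      show "2 * \<alpha>l n \<le> 2 * as" using L(2)[of n] by simp
      show "0 < (as - a0) / 2" using as_gt by simp
      show "(as - a0) / 2 \<le> \<alpha>l n - a0" using L(1)[of n] by simp
    qed
    finally show ?thesis using o by (simp add: opt_def)
  qed
  have \<alpha>l_lim: "\<alpha>l \<longlonglongrightarrow> as"
  proof (rule tendsto_sandwich[of "\<lambda>n. as - 1 / (real n + 1)" _ _ "\<lambda>n. as"])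
    show "eventually (\<lambda>n. as - 1 / (real n + 1) \<le> \<alpha>l n) sequentially"
    proof (rule always_eventually, intro allI)
      fix n
      show "as - 1 / (real n + 1) \<le> \<alpha>l n" using L(1)[of n] by simp
    qed
    show "eventually (\<lambda>n. \<alpha>l n \<le> as) sequentially" using L(2) by auto
    show "(\<lambda>n. as - 1 / (real n + 1)) \<longlonglongrightarrow> as" by real_asymp
  qed simp
  obtain rl t1 \<rho>1 where rl: "strict_mono rl" and lim1: "\<forall>j<N. t1 j \<in> S1 \<and> 0 \<le> \<rho>1 j \<and>
      (\<lambda>n. tl (rl n) j) \<longlonglongrightarrow> t1 j \<and> (\<lambda>n. \<rho>l (rl n) j) \<longlonglongrightarrow> \<rho>1 j"
    using cfg_limit[of tl \<rho>l B1] bndL by blast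
  have o1: "\<forall>j<N. opt as j (t1 j) (\<rho>1 j)"
  proof (intro allI impI)
    fix j assume j: "j < N"
    have "(\<lambda>n. \<alpha>l (rl n)) \<longlonglongrightarrow> as" using LIMSEQ_subseq_LIMSEQ[OF \<alpha>l_lim rl] by (simp add: o_def)
    then show "opt as j (t1 j) (\<rho>1 j)"
      by (rule opt_limit) (use L(4) j lim1 in auto)
  qed
  have C1: "lam\<^sup>2 \<le> Cst t1 \<rho>1"
  proof -
    have "(\<lambda>n. Cst (tl (rl n)) (\<rho>l (rl n))) \<longlonglongrightarrow> Cst t1 \<rho>1" using lim1 by (intro Cst_cont) auto
    then show ?thesis by (rule LIMSEQ_le_const) (use L(5) in auto)
  qed
  define \<alpha>r where "\<alpha>r n = as + 1 / (real n + 1)" for n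
  have \<alpha>r1: "\<alpha>r n > as" "\<alpha>r n \<le> as + 1" for n
  proof -
    have "1 / (real n + 1) > 0" "1 / (real n + 1) \<le> 1" by (auto simp: field_simps)
    then show "\<alpha>r n > as" "\<alpha>r n \<le> as + 1" by (auto simp: \<alpha>r_def)
  qed
  have \<alpha>r: "\<alpha>r n > a0" "\<alpha>r n > 0" for n using \<alpha>r1[of n] as_gt as0 by auto
  have "\<forall>n. \<exists>t \<rho>. \<forall>j<N. opt (\<alpha>r n) j (t j) (\<rho> j)"
    using optc_exists[OF \<alpha>r(2) \<alpha>r(1) fM] by blast
  then obtain tr \<rho>r where orr: "\<And>n. \<forall>j<N. opt (\<alpha>r n) j (tr n j) (\<rho>r n j)" by metis
  have Cr: "Cst (tr n) (\<rho>r n) < lam\<^sup>2" for n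
  proof (rule ccontr)
    assume "\<not> ?thesis"
    then have "lam\<^sup>2 \<le> Cst (tr n) (\<rho>r n)" by simp
    then have "\<alpha>r n \<in> Sset a0" using orr[of n] \<alpha>r[of n] unfolding Sset_def by blast
    then have "\<alpha>r n \<le> as" unfolding as_def using bdd by (rule cSup_upper)
    then show False using \<alpha>r1[of n] by simp
  qed
  define B2 where "B2 = 2 * (as + 1) / (as - a0)"
  have bndR: "tr n j \<in> S1 \<and> 0 \<le> \<rho>r n j \<and> \<rho>r n j \<le> B2" if j: "j < N" for n j
  proof -
    have o: "opt (\<alpha>r n) j (tr n j) (\<rho>r n j)" using orr j by blast
    have "\<rho>r n j \<le> 2 * \<alpha>r n / (\<alpha>r n - a0)" by (rule opt_rho_bound[OF \<alpha>r(2) \<alpha>r(1) fM j o])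
    also have "\<dots> \<le> B2" unfolding B2_def
    proof (rule frac_le)
      show "0 \<le> 2 * (as + 1)" using as0 by simp
      show "2 * \<alpha>r n \<le> 2 * (as + 1)" using \<alpha>r1[of n] by simp
      show "0 < as - a0" using as_gt by simp
      show "as - a0 \<le> \<alpha>r n - a0" using \<alpha>r1[of n] by simp
    qed
    finally show ?thesis using o by (simp add: opt_def)
  qed
  have \<alpha>r_lim: "\<alpha>r \<longlonglongrightarrow> as" unfolding \<alpha>r_def by real_asymp
  obtain rr t2 \<rho>2 where rr: "strict_mono rr" and lim2: "\<forall>j<N. t2 j \<in> S1 \<and> 0 \<le> \<rho>2 j \<and>
      (\<lambda>n. tr (rr n) j) \<longlonglongrightarrow> t2 j \<and> (\<lambda>n. \<rho>r (rr n) j) \<longlonglongrightarrow> \<rho>2 j"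
    using cfg_limit[of tr \<rho>r B2] bndR by blast
  have o2: "\<forall>j<N. opt as j (t2 j) (\<rho>2 j)"
  proof (intro allI impI)
    fix j assume j: "j < N"
    have "(\<lambda>n. \<alpha>r (rr n)) \<longlonglongrightarrow> as" using LIMSEQ_subseq_LIMSEQ[OF \<alpha>r_lim rr] by (simp add: o_def)
    then show "opt as j (t2 j) (\<rho>2 j)"
      by (rule opt_limit) (use orr j lim2 in auto)
  qed
  have C2: "Cst t2 \<rho>2 \<le> lam\<^sup>2"
  proof -
    have "(\<lambda>n. Cst (tr (rr n)) (\<rho>r (rr n))) \<longlonglongrightarrow> Cst t2 \<rho>2" using lim2 by (intro Cst_cont) auto
    then show ?thesis by (rule LIMSEQ_le_const2) (use Cr in \<open>auto intro: less_imp_le\<close>)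
  qed
  from interp[OF as0 o1 o2 C2 C1] obtain \<mu>0 where
    \<mu>0: "\<mu>0 \<in> WFR_ball lam \<mu>1" "ext_integral f \<mu>0 = ereal (as * lam\<^sup>2 + (\<Sum>j<N. r j * tm f as (x j) (t1 j) (\<rho>1 j)))"
    "\<exists>P. finite P \<and> P \<subseteq> S1 \<and> card P \<le> N + 2 \<and> emeasure \<mu>0 (S1 - P) = 0" by blast
  have "\<forall>\<nu>\<in>WFR_ball lam \<mu>1. ext_integral f \<nu> \<le> ereal (as * lam\<^sup>2 + (\<Sum>j<N. r j * tm f as (x j) (t1 j) (\<rho>1 j)))"
    using weak_opt[OF as0 as_gt fM o1] by blast
  then show goal using \<mu>0 by (intro finish) auto
qed

lemma main: goal
proof -
  obtain tM where tM: "tM \<in> S1" "\<forall>y\<in>S1. f y \<le> f tM" using f_max by blast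
  define a0 where "a0 = max (f tM) 0"
  have a0: "a0 \<ge> 0" by (simp add: a0_def)
  have fM: "\<forall>y\<in>S1. f y \<le> a0" using tM by (auto simp: a0_def intro: le_max_iff_disj[THEN iffD2])
  have hM1: "f tM > 0 \<longrightarrow> a0 = f tM" and hM2: "f tM \<le> 0 \<longrightarrow> a0 = 0" by (auto simp: a0_def)
  show goal
  proof (cases "Sset a0 = {}")
    case True then show ?thesis using caseC[OF a0 fM tM(1) hM1 hM2] by simp
  next
    case False
    show ?thesis
    proof (cases "bdd_above (Sset a0)")
      case True then show ?thesis using caseB[OF a0 fM False] by simp
    next
      case nb: False then show ?thesis using caseA[OF a0 fM tM(1)] by simp
    qed
  qed
qed

end


theorem theorem4p3:
  fixes f :: "complex \<Rightarrow> real" and lam :: real and \<mu>1 :: "complex measure"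
    and N :: nat and r :: "nat \<Rightarrow> real" and x :: "nat \<Rightarrow> complex"
  assumes usc: "usc_on_S1 f"
    and lam: "lam \<ge> 0"
    and mu1: "\<mu>1 \<in> Mplus_S1"
    and atoms_on: "\<forall>j<N. x j \<in> S1"
    and atoms_distinct: "inj_on x {..<N}"
    and weights_pos: "\<forall>j<N. r j > 0"
    and mu1_eq: "\<forall>A \<in> sets \<mu>1. emeasure \<mu>1 A = (\<Sum>j<N. ennreal (r j) * indicator A (x j))"
  shows "\<exists>\<mu>0 \<in> WFR_ball lam \<mu>1.
           (\<forall>\<nu> \<in> WFR_ball lam \<mu>1. ext_integral f \<nu> \<le> ext_integral f \<mu>0)
         \<and> (\<exists>P. finite P \<and> P \<subseteq> S1 \<and> card P \<le> N + 2 \<and> emeasure \<mu>0 (S1 - P) = 0)"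
proof -
  interpret setting f lam \<mu>1 N r x
    by unfold_locales (use usc lam mu1 atoms_on atoms_distinct weights_pos mu1_eq in auto)
  show ?thesis using main unfolding goal_def .
qed

end
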